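(* Assume (A1), (A2), (A3), (A5). There exist nice constants $\kappa_1,\kappa_2$ such that, for every large enough constant $\alpha$, $$\mathbb P\big(\|\mathcal W_N\mathcal W_N^H-\widetilde{\mathcal W}_N\widetilde{\mathcal W}_N^H\|>\alpha\big)\le\kappa_1L\exp(-\kappa_2M\alpha).$$
   Context: (A1): $(y_{m,n})_{n\in\mathbb Z}$, $m\ge1$, are mutually independent stationary zero-mean jointly circularly symmetric complex Gaussian scalar time series with autocovariances $r_m(k)=\mathbb E[y_{m,n+k}y_{m,n}^*]$ and spectral densities $\mathcal S_m$. (A2): $M=M(N)$, $L=L(N)$, $M,N\to\infty$, $ML/N\to c_\star\in(0,\infty)$, $L=O(N^\beta)$, $\beta\in(0,1)$. (A3): $\sup_m\max_\nu\mathcal S_m<\infty$, $\inf_m\min_\nu\mathcal S_m>0$. (A5): for some $\gamma_0>0$, $\sup_m\sum_n(1+|n|)^{\gamma_0}|r_m(n)|<\infty$. Let $\mathbf y_n=(y_{1,n},\dots,y_{M,n})^T$. $\mathcal W_N$ is the $ML\times N$ block matrix whose $(l,n)$ block ($l=1,\dots,L$, $n=1,\dots,N$, blocks of size $M\times1$) is $N^{-1/2}\mathbf y_{n+l-1}$. $\widetilde{\mathcal W}_N$ is the $ML\times(N+L-1)$ block matrix whose $(l,j)$ block ($l=1,\dots,L$, $j=1,\dots,N+L-1$) is $N^{-1/2}\mathbf y_{j+l-L}$ if $1\le j+l-L\le N$ and $0$ otherwise. A nice constant is a positive constant independent of $L,M,N$. *)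

theory Defs
  imports "HOL-Probability.Probability"
begin

definition real_gaussian :: "'a measure \<Rightarrow> ('a \<Rightarrow> real) \<Rightarrow> bool" where
  "real_gaussian M X \<longleftrightarrow> X \<in> borel_measurable M \<and>
     (\<exists>\<mu> \<sigma>. (\<sigma> = 0 \<and> (AE \<omega> in M. X \<omega> = \<mu>)) \<or>
            (\<sigma> > 0 \<and> distributed M lborel X (normal_density \<mu> \<sigma>)))"

text \<open>A zero-mean jointly circularly symmetric complex Gaussian scalar time series
  indexed by the integers: all finite linear combinations are jointly (real) Gaussian,
  the mean is zero and the pseudo-covariance vanishes.\<close>
definition zm_ccs_gaussian_series :: "'a measure \<Rightarrow> (int \<Rightarrow> 'a \<Rightarrow> complex) \<Rightarrow> bool" where
  "zm_ccs_gaussian_series M x \<longleftrightarrow>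
     (\<forall>n. x n \<in> borel_measurable M) \<and>
     (\<forall>F c. finite F \<longrightarrow> real_gaussian M (\<lambda>\<omega>. Re (\<Sum>n\<in>F. c n * x n \<omega>))) \<and>
     (\<forall>n. integral\<^sup>L M (x n) = 0) \<and>
     (\<forall>n n'. integral\<^sup>L M (\<lambda>\<omega>. x n \<omega> * x n' \<omega>) = 0)"

definition spectral_density :: "(int \<Rightarrow> complex) \<Rightarrow> real \<Rightarrow> complex" where
  "spectral_density r \<nu> = (\<Sum>\<^sub>\<infinity>k\<in>(UNIV::int set). r k * cis (- 2 * pi * real_of_int k * \<nu>))"

definition opnorm :: "'i set \<Rightarrow> 'j set \<Rightarrow> ('i \<Rightarrow> 'j \<Rightarrow> complex) \<Rightarrow> real" where
  "opnorm I J A = Sup {sqrt (\<Sum>i\<in>I. (cmod (\<Sum>j\<in>J. A i j * x j))\<^sup>2) | x.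
                        (\<Sum>j\<in>J. (cmod (x j))\<^sup>2) \<le> 1}"

definition gram :: "'j set \<Rightarrow> ('i \<Rightarrow> 'j \<Rightarrow> complex) \<Rightarrow> 'i \<Rightarrow> 'i \<Rightarrow> complex" where
  "gram J A i i' = (\<Sum>j\<in>J. A i j * cnj (A i' j))"

text \<open>The matrix W_N: row index (l,m) with l in {1..L}, m in {1..M} (entry m of block l),
  column index n in {1..N}; entry N^(-1/2) y_{m,n+l-1}.\<close>
definition W_mat :: "(nat \<Rightarrow> int \<Rightarrow> 'a \<Rightarrow> complex) \<Rightarrow> nat \<Rightarrow> 'a \<Rightarrow> nat \<times> nat \<Rightarrow> nat \<Rightarrow> complex" where
  "W_mat y N \<omega> lm n = y (snd lm) (int n + int (fst lm) - 1) \<omega> / complex_of_real (sqrt (real N))"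

text \<open>The matrix W~_N: column index j in {1..N+L-1}; entry N^(-1/2) y_{m,j+l-L} if
  1 <= j+l-L <= N and 0 otherwise.\<close>
definition Wt_mat :: "(nat \<Rightarrow> int \<Rightarrow> 'a \<Rightarrow> complex) \<Rightarrow> nat \<Rightarrow> nat \<Rightarrow> 'a \<Rightarrow> nat \<times> nat \<Rightarrow> nat \<Rightarrow> complex" where
  "Wt_mat y N L \<omega> lm j =
     (let t = int j + int (fst lm) - int L in
      if 1 \<le> t \<and> t \<le> int N then y (snd lm) t \<omega> / complex_of_real (sqrt (real N)) else 0)"

end

theory Submission
  imports Defs
begin

lemma gauss_integrable:
  assumes P: "prob_space P" and g: "real_gaussian P X"
  shows "integrable P (\<lambda>\<omega>. (X \<omega>)\<^sup>2)" "integrable P X"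
proof -
  interpret prob_space P by fact
  have Xm[measurable]: "X \<in> borel_measurable P" using g by (simp add: real_gaussian_def)
  obtain \<mu> \<sigma> where c: "(\<sigma> = 0 \<and> (AE \<omega> in P. X \<omega> = \<mu>)) \<or>
            (\<sigma> > 0 \<and> distributed P lborel X (normal_density \<mu> \<sigma>))"
    using g by (auto simp: real_gaussian_def)
  have "integrable P (\<lambda>\<omega>. (X \<omega>)\<^sup>2) \<and> integrable P X"
  proof (cases "\<sigma> = 0 \<and> (AE \<omega> in P. X \<omega> = \<mu>)")
    case True
    then have ae: "AE \<omega> in P. X \<omega> = \<mu>" by auto
    have 1: "integrable P (\<lambda>\<omega>. (X \<omega>)\<^sup>2) = integrable P (\<lambda>\<omega>. \<mu>\<^sup>2)"
      by (rule integrable_cong_AE) (use ae in auto)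
    have 2: "integrable P X = integrable P (\<lambda>\<omega>. \<mu>)"
      by (rule integrable_cong_AE) (use ae in auto)
    show ?thesis using 1 2 by simp
  next
    case False
    with c have s: "\<sigma> > 0" and D: "distributed P lborel X (normal_density \<mu> \<sigma>)" by auto
    have i0: "integrable lborel (\<lambda>x. normal_density \<mu> \<sigma> x * (x - \<mu>)^0)"
      and i1: "integrable lborel (\<lambda>x. normal_density \<mu> \<sigma> x * (x - \<mu>)^1)"
      and i2: "integrable lborel (\<lambda>x. normal_density \<mu> \<sigma> x * (x - \<mu>)^2)"
      using integrable_normal_moment[where k=0 and \<mu>=\<mu> and \<sigma>=\<sigma>, OF s] integrable_normal_moment[where k=1 and \<mu>=\<mu> and \<sigma>=\<sigma>, OF s]
        integrable_normal_moment[where k=2 and \<mu>=\<mu> and \<sigma>=\<sigma>, OF s] by auto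
    then have j0: "integrable lborel (\<lambda>x. normal_density \<mu> \<sigma> x)"
      and j1: "integrable lborel (\<lambda>x. normal_density \<mu> \<sigma> x * (x - \<mu>))"
      and j2: "integrable lborel (\<lambda>x. normal_density \<mu> \<sigma> x * (x - \<mu>)\<^sup>2)" by auto
    have eq2: "(\<lambda>x. normal_density \<mu> \<sigma> x * x\<^sup>2) = (\<lambda>x. normal_density \<mu> \<sigma> x * (x - \<mu>)^2
        + 2 * \<mu> * (normal_density \<mu> \<sigma> x * (x - \<mu>)) + \<mu>\<^sup>2 * (normal_density \<mu> \<sigma> x))"
      by (auto simp: power2_eq_square algebra_simps)
    have eq1: "(\<lambda>x. normal_density \<mu> \<sigma> x * x) = (\<lambda>x. 
        (normal_density \<mu> \<sigma> x * (x - \<mu>)) + \<mu> * (normal_density \<mu> \<sigma> x))"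
      by (auto simp: algebra_simps)
    have "integrable lborel (\<lambda>x. normal_density \<mu> \<sigma> x * x\<^sup>2)"
      unfolding eq2 using j0 j1 j2 by simp
    then have A: "integrable P (\<lambda>\<omega>. (X \<omega>)\<^sup>2)"
      using distributed_integrable[OF D, of "\<lambda>x. x\<^sup>2"] by simp
    have "integrable lborel (\<lambda>x. normal_density \<mu> \<sigma> x * x)"
      unfolding eq1 using j0 j1 j2 by simp
    then have B: "integrable P X"
      using distributed_integrable[OF D, of "\<lambda>x. x"] by simp
    show ?thesis using A B by simp
  qed
  then show "integrable P (\<lambda>\<omega>. (X \<omega>)\<^sup>2)" "integrable P X" by auto
qed

lemma normal_exp_sq_identity:
  fixes \<sigma> v x :: real
  assumes s: "0 < \<sigma>" and sv: "\<sigma>\<^sup>2 \<le> v"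
  defines "a \<equiv> 1 / (2 * \<sigma>\<^sup>2) - 1 / (4 * v)"
  defines "\<tau> \<equiv> sqrt (1 / (2 * a))"
  shows "0 < a" "0 < \<tau>" "\<tau> / \<sigma> \<le> sqrt 2"
    "normal_density 0 \<sigma> x * exp (x\<^sup>2 / (4 * v)) = \<tau> / \<sigma> * normal_density 0 \<tau> x"
proof -
  have s2: "0 < \<sigma>\<^sup>2" using s by simp
  have vp: "0 < v" using s2 sv by linarith
  have "1 / (4 * v) < 1 / (2 * \<sigma>\<^sup>2)"
    using s2 sv vp by (simp add: field_simps)
  then show ap: "0 < a" unfolding a_def by simp
  then show tp: "0 < \<tau>" unfolding \<tau>_def by simp
  have t2: "\<tau>\<^sup>2 = 1 / (2 * a)" unfolding \<tau>_def using ap by simp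
  have "1 / (2 * a) \<le> 2 * \<sigma>\<^sup>2"
  proof -
    have "1 / (4 * \<sigma>\<^sup>2) \<le> a" unfolding a_def using s2 sv vp by (simp add: field_simps)
    then have "1 \<le> a * (4 * \<sigma>\<^sup>2)" using s2 by (simp add: field_simps)
    then show ?thesis using ap s2 by (simp add: field_simps)
  qed
  then have "\<tau>\<^sup>2 \<le> (sqrt 2 * \<sigma>)\<^sup>2" using t2 by (simp add: power_mult_distrib)
  then have "\<tau> \<le> sqrt 2 * \<sigma>" using tp s by (meson power2_le_imp_le less_imp_le mult_nonneg_nonneg real_sqrt_ge_zero zero_le_numeral)
  then show "\<tau> / \<sigma> \<le> sqrt 2" using s by (simp add: field_simps)
  have e: "exp (- x\<^sup>2 / (2 * \<sigma>\<^sup>2)) * exp (x\<^sup>2 / (4 * v)) = exp (- x\<^sup>2 / (2 * \<tau>\<^sup>2))"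
  proof -
    have "- x\<^sup>2 / (2 * \<sigma>\<^sup>2) + x\<^sup>2 / (4 * v) = - x\<^sup>2 / (2 * \<tau>\<^sup>2)"
      unfolding t2 a_def using s2 vp ap by (simp add: field_simps)
    then show ?thesis by (simp add: exp_add[symmetric])
  qed
  have sq1: "sqrt (2 * pi * \<sigma>\<^sup>2) = sqrt (2 * pi) * \<sigma>" using s by (simp add: real_sqrt_mult)
  have sq2: "sqrt (2 * pi * \<tau>\<^sup>2) = sqrt (2 * pi) * \<tau>" using tp by (simp add: real_sqrt_mult)
  show "normal_density 0 \<sigma> x * exp (x\<^sup>2 / (4 * v)) = \<tau> / \<sigma> * normal_density 0 \<tau> x"
    unfolding normal_density_def sq1 sq2 using e s tp
    by (simp add: field_simps)
qed

lemma gauss_mgf: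
  assumes P: "prob_space P" and g: "real_gaussian P X"
    and m0: "integral\<^sup>L P X = 0" and vb: "integral\<^sup>L P (\<lambda>\<omega>. (X \<omega>)\<^sup>2) \<le> v" and vpos: "0 < v"
  shows "(\<integral>\<^sup>+\<omega>. ennreal (exp ((X \<omega>)\<^sup>2 / (4 * v))) \<partial>P) \<le> ennreal (sqrt 2)"
proof -
  interpret prob_space P by fact
  have Xm[measurable]: "X \<in> borel_measurable P" using g by (simp add: real_gaussian_def)
  obtain \<mu> \<sigma> where c: "(\<sigma> = 0 \<and> (AE \<omega> in P. X \<omega> = \<mu>)) \<or>
            (\<sigma> > 0 \<and> distributed P lborel X (normal_density \<mu> \<sigma>))"
    using g by (auto simp: real_gaussian_def)
  show ?thesis
  proof (cases "\<sigma> = 0 \<and> (AE \<omega> in P. X \<omega> = \<mu>)")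
    case True
    then have ae: "AE \<omega> in P. X \<omega> = \<mu>" by auto
    have "integral\<^sup>L P X = integral\<^sup>L P (\<lambda>\<omega>. \<mu>)"
      by (rule integral_cong_AE) (use ae in auto)
    then have "\<mu> = 0" using m0 by (simp add: prob_space)
    then have ae0: "AE \<omega> in P. X \<omega> = 0" using ae by simp
    have "(\<integral>\<^sup>+\<omega>. ennreal (exp ((X \<omega>)\<^sup>2 / (4 * v))) \<partial>P) = (\<integral>\<^sup>+\<omega>. 1 \<partial>P)"
      by (rule nn_integral_cong_AE) (use ae0 in auto)
    also have "\<dots> = 1" by (simp add: emeasure_space_1)
    also have "\<dots> \<le> ennreal (sqrt 2)" by simp
    finally show ?thesis .
  next
    case False
    with c have s: "\<sigma> > 0" and D: "distributed P lborel X (normal_density \<mu> \<sigma>)" by auto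
    have "expectation X = \<mu>" by (rule normal_distributed_expectation[OF s D])
    then have mu0: "\<mu> = 0" using m0 by simp
    have "variance X = \<sigma>\<^sup>2" by (rule normal_distributed_variance[OF s D])
    then have "\<sigma>\<^sup>2 \<le> v" using m0 vb by simp
    note id = normal_exp_sq_identity[OF s this]
    define a where "a = 1 / (2 * \<sigma>\<^sup>2) - 1 / (4 * v)"
    define \<tau> where "\<tau> = sqrt (1 / (2 * a))"
    have tp: "0 < \<tau>" and tb: "\<tau> / \<sigma> \<le> sqrt 2"
      and pw: "\<And>x. normal_density 0 \<sigma> x * exp (x\<^sup>2 / (4 * v)) = \<tau> / \<sigma> * normal_density 0 \<tau> x"
      using id unfolding a_def \<tau>_def by auto
    have "(\<integral>\<^sup>+\<omega>. ennreal (exp ((X \<omega>)\<^sup>2 / (4 * v))) \<partial>P)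
        = (\<integral>\<^sup>+x. ennreal (normal_density \<mu> \<sigma> x) * ennreal (exp (x\<^sup>2 / (4 * v))) \<partial>lborel)"
      by (rule distributed_nn_integral[OF D, symmetric]) simp
    also have "\<dots> = (\<integral>\<^sup>+x. ennreal (\<tau> / \<sigma>) * ennreal (normal_density 0 \<tau> x) \<partial>lborel)"
      using s tp by (intro nn_integral_cong) (simp add: mu0 ennreal_mult'[symmetric] pw)
    also have "\<dots> = ennreal (\<tau> / \<sigma>) * (\<integral>\<^sup>+x. ennreal (normal_density 0 \<tau> x) \<partial>lborel)"
      by (rule nn_integral_cmult) simp
    also have "(\<integral>\<^sup>+x. ennreal (normal_density 0 \<tau> x) \<partial>lborel) = 1"
      using integrable_normal_density[where \<mu>=0 and \<sigma>=\<tau>, OF tp]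
        integral_normal_density[where \<mu>=0 and \<sigma>=\<tau>, OF tp]
      by (subst nn_integral_eq_integral) auto
    finally show ?thesis using tb by (simp add: ennreal_leI)
  qed
qed

lemma borel_measurable_cnj'[measurable]:
  fixes f :: "'a \<Rightarrow> complex"
  assumes [measurable]: "f \<in> borel_measurable M"
  shows "(\<lambda>x. cnj (f x)) \<in> borel_measurable M"
proof -
  have "(\<lambda>x. cnj (f x)) = (\<lambda>x. complex_of_real (Re (f x)) - \<i> * complex_of_real (Im (f x)))"
    by (auto simp: complex_eq_iff)
  also have "\<dots> \<in> borel_measurable M" by measurable
  finally show ?thesis .
qed

lemma series_meas:
  assumes "zm_ccs_gaussian_series P x"
  shows "x t \<in> borel_measurable P"
  using assms by (simp add: zm_ccs_gaussian_series_def)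

lemma series_lin_gauss:
  assumes "zm_ccs_gaussian_series P x" "finite F"
  shows "real_gaussian P (\<lambda>\<omega>. Re (\<Sum>n\<in>F. c n * x n \<omega>))"
  using assms unfolding zm_ccs_gaussian_series_def by blast

lemma series_L2:
  assumes P: "prob_space P" and gs: "zm_ccs_gaussian_series P x"
  shows "integrable P (\<lambda>\<omega>. (cmod (x t \<omega>))\<^sup>2)" "integrable P (x t)"
proof -
  have g1: "real_gaussian P (\<lambda>\<omega>. Re (x t \<omega>))"
    using series_lin_gauss[OF gs, of "{t}" "\<lambda>_. 1"] by simp
  have g2: "real_gaussian P (\<lambda>\<omega>. Im (x t \<omega>))"
    using series_lin_gauss[OF gs, of "{t}" "\<lambda>_. - \<i>"] by simp
  note a1 = gauss_integrable[OF P g1] and a2 = gauss_integrable[OF P g2]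
  have "integrable P (\<lambda>\<omega>. (Re (x t \<omega>))\<^sup>2 + (Im (x t \<omega>))\<^sup>2)"
    using a1 a2 by simp
  then show "integrable P (\<lambda>\<omega>. (cmod (x t \<omega>))\<^sup>2)" by (simp add: cmod_power2)
  have "integrable P (\<lambda>\<omega>. complex_of_real (Re (x t \<omega>)) + \<i> * complex_of_real (Im (x t \<omega>)))"
    using a1(2) a2(2) by auto
  then show "integrable P (x t)" by (simp add: complex_eq[symmetric])
qed

lemma series_prod_integrable:
  assumes P: "prob_space P" and gs: "zm_ccs_gaussian_series P x"
  shows "integrable P (\<lambda>\<omega>. x t \<omega> * cnj (x t' \<omega>))"
proof (rule Bochner_Integration.integrable_bound[where f="\<lambda>\<omega>. (cmod (x t \<omega>))\<^sup>2 + (cmod (x t' \<omega>))\<^sup>2"])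
  show "integrable P (\<lambda>\<omega>. (cmod (x t \<omega>))\<^sup>2 + (cmod (x t' \<omega>))\<^sup>2)"
    using series_L2[OF P gs] by simp
  have [measurable]: "\<And>t. x t \<in> borel_measurable P" using series_meas[OF gs] .
  show "(\<lambda>\<omega>. x t \<omega> * cnj (x t' \<omega>)) \<in> borel_measurable P" by measurable
  show "AE \<omega> in P. norm (x t \<omega> * cnj (x t' \<omega>)) \<le> norm ((cmod (x t \<omega>))\<^sup>2 + (cmod (x t' \<omega>))\<^sup>2)"
  proof (intro AE_I2)
    fix \<omega>
    have "cmod (x t \<omega>) * cmod (x t' \<omega>) \<le> (cmod (x t \<omega>))\<^sup>2 + (cmod (x t' \<omega>))\<^sup>2"
      using sum_squares_bound[of "cmod (x t \<omega>)" "cmod (x t' \<omega>)"]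
        mult_nonneg_nonneg[OF norm_ge_zero norm_ge_zero, of "x t \<omega>" "x t' \<omega>"] by linarith
    then show "norm (x t \<omega> * cnj (x t' \<omega>)) \<le> norm ((cmod (x t \<omega>))\<^sup>2 + (cmod (x t' \<omega>))\<^sup>2)"
      by (simp add: norm_mult)
  qed
qed

lemma sum_shift_le:
  fixes \<rho> :: "int \<Rightarrow> complex"
  assumes fin: "finite T" and Rb: "\<And>F. finite F \<Longrightarrow> (\<Sum>d\<in>F. cmod (\<rho> d)) \<le> R"
  shows "(\<Sum>t'\<in>T. cmod (\<rho> (t - t'))) \<le> R"
proof -
  have "inj_on (\<lambda>t'. t - t') T" by (auto simp: inj_on_def)
  then have "(\<Sum>t'\<in>T. cmod (\<rho> (t - t'))) = (\<Sum>d\<in>(\<lambda>t'. t - t') ` T. cmod (\<rho> d))"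
    by (simp add: sum.reindex)
  also have "\<dots> \<le> R" using fin by (intro Rb) simp
  finally show ?thesis .
qed

lemma Z_moment:
  assumes P: "prob_space P" and gs: "zm_ccs_gaussian_series P x"
    and ac: "\<And>n k. integral\<^sup>L P (\<lambda>\<omega>. x (n + k) \<omega> * cnj (x n \<omega>)) = \<rho> k"
    and fin: "finite T" and cb: "\<And>t. cmod (c t) \<le> 1"
    and Rb: "\<And>F. finite F \<Longrightarrow> (\<Sum>d\<in>F. cmod (\<rho> d)) \<le> R"
  shows "integrable P (\<lambda>\<omega>. (cmod (\<Sum>t\<in>T. c t * x t \<omega>))\<^sup>2)"
    "integral\<^sup>L P (\<lambda>\<omega>. (cmod (\<Sum>t\<in>T. c t * x t \<omega>))\<^sup>2) \<le> real (card T) * R"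
proof -
  define G where "G \<omega> = (\<Sum>t\<in>T. \<Sum>t'\<in>T. (c t * cnj (c t')) * (x t \<omega> * cnj (x t' \<omega>)))" for \<omega>
  have eqZ: "(cmod (\<Sum>t\<in>T. c t * x t \<omega>))\<^sup>2 = Re (G \<omega>)" for \<omega>
  proof -
    have "complex_of_real ((cmod (\<Sum>t\<in>T. c t * x t \<omega>))\<^sup>2) = (\<Sum>t\<in>T. c t * x t \<omega>) * cnj (\<Sum>t\<in>T. c t * x t \<omega>)"
      by (rule complex_norm_square)
    also have "\<dots> = G \<omega>"
      unfolding G_def cnj_sum sum_product by (intro sum.cong refl) (simp add: algebra_simps)
    finally show ?thesis by (metis Re_complex_of_real)
  qed
  have intG: "integrable P G"
    unfolding G_def using series_prod_integrable[OF P gs] by auto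
  have "integral\<^sup>L P G = (\<Sum>t\<in>T. \<Sum>t'\<in>T. (c t * cnj (c t')) * \<rho> (t - t'))"
  proof -
    have "integral\<^sup>L P G = (\<Sum>t\<in>T. \<Sum>t'\<in>T. (c t * cnj (c t')) * integral\<^sup>L P (\<lambda>\<omega>. x t \<omega> * cnj (x t' \<omega>)))"
      unfolding G_def using series_prod_integrable[OF P gs]
      by (simp add: integral_sum integral_mult_right_zero)
    also have "\<dots> = (\<Sum>t\<in>T. \<Sum>t'\<in>T. (c t * cnj (c t')) * \<rho> (t - t'))"
    proof (intro sum.cong refl)
      fix t t' :: int
      have "integral\<^sup>L P (\<lambda>\<omega>. x t \<omega> * cnj (x t' \<omega>)) = \<rho> (t - t')"
        using ac[of t' "t - t'"] by simp
      then show "c t * cnj (c t') * integral\<^sup>L P (\<lambda>\<omega>. x t \<omega> * cnj (x t' \<omega>)) = c t * cnj (c t') * \<rho> (t - t')"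
        by simp
    qed
    finally show ?thesis .
  qed
  show "integrable P (\<lambda>\<omega>. (cmod (\<Sum>t\<in>T. c t * x t \<omega>))\<^sup>2)"
    unfolding eqZ using intG by auto
  have "integral\<^sup>L P (\<lambda>\<omega>. (cmod (\<Sum>t\<in>T. c t * x t \<omega>))\<^sup>2) = Re (integral\<^sup>L P G)"
    unfolding eqZ using intG by simp
  also have "\<dots> \<le> cmod (integral\<^sup>L P G)" by (rule complex_Re_le_cmod)
  also have "\<dots> \<le> (\<Sum>t\<in>T. \<Sum>t'\<in>T. cmod ((c t * cnj (c t')) * \<rho> (t - t')))"
    unfolding \<open>integral\<^sup>L P G = _\<close>
    by (rule order.trans[OF norm_sum sum_mono]) (rule norm_sum)
  also have "\<dots> \<le> (\<Sum>t\<in>T. \<Sum>t'\<in>T. cmod (\<rho> (t - t')))"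
  proof (intro sum_mono)
    fix t t'
    have "cmod (c t * cnj (c t')) \<le> 1"
      using cb[of t] cb[of t'] by (simp add: norm_mult mult_le_one)
    then show "cmod ((c t * cnj (c t')) * \<rho> (t - t')) \<le> cmod (\<rho> (t - t'))"
      by (simp add: norm_mult mult_left_le_one_le del: complex_cnj_mult)
  qed
  also have "\<dots> \<le> (\<Sum>t\<in>T. R)"
    by (intro sum_mono sum_shift_le[OF fin Rb]) auto
  also have "\<dots> = real (card T) * R" by simp
  finally show "integral\<^sup>L P (\<lambda>\<omega>. (cmod (\<Sum>t\<in>T. c t * x t \<omega>))\<^sup>2) \<le> real (card T) * R" .
qed


lemma exp_amgm: fixes a b :: real shows "exp (a + b) \<le> (exp (2 * a) + exp (2 * b)) / 2"
proof -
  have "0 \<le> (exp a - exp b)\<^sup>2" by simp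
  then have "2 * (exp a * exp b) \<le> (exp a)\<^sup>2 + (exp b)\<^sup>2" by (simp add: power2_eq_square algebra_simps)
  moreover have "(exp a)\<^sup>2 = exp (2 * a)" "(exp b)\<^sup>2 = exp (2 * b)"
    by (simp_all add: exp_double[symmetric] power2_eq_square exp_add[symmetric])
  ultimately show ?thesis by (simp add: exp_add)
qed

lemma Z_mgf:
  assumes P: "prob_space P" and gs: "zm_ccs_gaussian_series P x"
    and ac: "\<And>n k. integral\<^sup>L P (\<lambda>\<omega>. x (n + k) \<omega> * cnj (x n \<omega>)) = \<rho> k"
    and fin: "finite T" and cb: "\<And>t. cmod (c t) \<le> 1"
    and Rb: "\<And>F. finite F \<Longrightarrow> (\<Sum>d\<in>F. cmod (\<rho> d)) \<le> R"
    and vb: "real (card T) * R \<le> v" and vp: "0 < v"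
  shows "(\<integral>\<^sup>+\<omega>. ennreal (exp ((cmod (\<Sum>t\<in>T. c t * x t \<omega>))\<^sup>2 / (8 * v))) \<partial>P) \<le> ennreal (sqrt 2)"
proof -
  interpret prob_space P by fact
  have [measurable]: "\<And>t. x t \<in> borel_measurable P" using series_meas[OF gs] .
  define Z where "Z \<omega> = (\<Sum>t\<in>T. c t * x t \<omega>)" for \<omega>
  note mom = Z_moment[where c=c and T=T and R=R, OF P gs ac fin cb Rb]
  have Zint: "integrable P (\<lambda>\<omega>. (cmod (Z \<omega>))\<^sup>2)" and Zb: "integral\<^sup>L P (\<lambda>\<omega>. (cmod (Z \<omega>))\<^sup>2) \<le> v"
    using mom vb unfolding Z_def by auto
  have xint: "\<And>t. integrable P (x t)" using series_L2[OF P gs] by auto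
  have EZ: "integral\<^sup>L P Z = 0"
  proof -
    have "integral\<^sup>L P Z = (\<Sum>t\<in>T. c t * integral\<^sup>L P (x t))"
      unfolding Z_def using xint by (simp add: integral_sum)
    also have "\<dots> = 0"
    proof -
      have "\<And>n. integral\<^sup>L P (x n) = 0" using gs unfolding zm_ccs_gaussian_series_def by blast
      then show ?thesis by simp
    qed
    finally show ?thesis .
  qed
  have Zi: "integrable P Z" unfolding Z_def using xint by auto
  have gX: "real_gaussian P (\<lambda>\<omega>. Re (Z \<omega>))"
    unfolding Z_def by (rule series_lin_gauss[OF gs fin])
  have ImZ: "Im (Z \<omega>) = Re (\<Sum>t\<in>T. (- \<i> * c t) * x t \<omega>)" for \<omega>
  proof -
    have "(\<Sum>t\<in>T. (- \<i> * c t) * x t \<omega>) = - \<i> * Z \<omega>"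
      unfolding Z_def by (simp add: sum_distrib_left algebra_simps)
    then show ?thesis by simp
  qed
  have gY: "real_gaussian P (\<lambda>\<omega>. Im (Z \<omega>))"
    unfolding ImZ by (rule series_lin_gauss[OF gs fin])
  have m1: "integral\<^sup>L P (\<lambda>\<omega>. Re (Z \<omega>)) = 0" using EZ Zi by simp
  have m2: "integral\<^sup>L P (\<lambda>\<omega>. Im (Z \<omega>)) = 0" using EZ Zi by simp
  have v1: "integral\<^sup>L P (\<lambda>\<omega>. (Re (Z \<omega>))\<^sup>2) \<le> v"
    using gauss_integrable[OF P gX] Zint
    by (intro order.trans[OF integral_mono Zb]) (auto simp: cmod_power2)
  have v2: "integral\<^sup>L P (\<lambda>\<omega>. (Im (Z \<omega>))\<^sup>2) \<le> v"
    using gauss_integrable[OF P gY] Zint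
    by (intro order.trans[OF integral_mono Zb]) (auto simp: cmod_power2)
  note b1 = gauss_mgf[OF P gX m1 v1 vp] and b2 = gauss_mgf[OF P gY m2 v2 vp]
  have pw: "ennreal (exp ((cmod (Z \<omega>))\<^sup>2 / (8 * v))) \<le>
      ennreal (1/2) * ennreal (exp ((Re (Z \<omega>))\<^sup>2 / (4 * v))) + ennreal (1/2) * ennreal (exp ((Im (Z \<omega>))\<^sup>2 / (4 * v)))"
    for \<omega>
  proof -
    have "exp ((cmod (Z \<omega>))\<^sup>2 / (8 * v)) = exp ((Re (Z \<omega>))\<^sup>2 / (8 * v) + (Im (Z \<omega>))\<^sup>2 / (8 * v))"
      by (simp add: cmod_power2 add_divide_distrib)
    also have "\<dots> \<le> (exp (2 * ((Re (Z \<omega>))\<^sup>2 / (8 * v))) + exp (2 * ((Im (Z \<omega>))\<^sup>2 / (8 * v)))) / 2"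
      by (rule exp_amgm)
    also have "\<dots> = 1/2 * exp ((Re (Z \<omega>))\<^sup>2 / (4 * v)) + 1/2 * exp ((Im (Z \<omega>))\<^sup>2 / (4 * v))"
      by simp
    finally have h: "exp ((cmod (Z \<omega>))\<^sup>2 / (8 * v)) \<le> 1/2 * exp ((Re (Z \<omega>))\<^sup>2 / (4 * v)) + 1/2 * exp ((Im (Z \<omega>))\<^sup>2 / (4 * v))" .
    define A where "A = exp ((Re (Z \<omega>))\<^sup>2 / (4 * v))"
    define B where "B = exp ((Im (Z \<omega>))\<^sup>2 / (4 * v))"
    have e1: "ennreal (1/2 * a) = ennreal (1/2) * ennreal a" if "0 \<le> a" for a :: real
      by (rule ennreal_mult) (simp_all add: that)
    have "ennreal (1/2 * A + 1/2 * B) = ennreal (1/2 * A) + ennreal (1/2 * B)"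
      by (rule ennreal_plus) (auto simp: A_def B_def)
    also have "\<dots> = ennreal (1/2) * ennreal A + ennreal (1/2) * ennreal B"
    proof -
      have "ennreal (1/2 * A) = ennreal (1/2) * ennreal A" by (rule e1) (simp add: A_def)
      moreover have "ennreal (1/2 * B) = ennreal (1/2) * ennreal B" by (rule e1) (simp add: B_def)
      ultimately show ?thesis by (rule arg_cong2[where f="(+)"])
    qed
    finally have e: "ennreal (1/2 * exp ((Re (Z \<omega>))\<^sup>2 / (4 * v)) + 1/2 * exp ((Im (Z \<omega>))\<^sup>2 / (4 * v))) =
      ennreal (1/2) * ennreal (exp ((Re (Z \<omega>))\<^sup>2 / (4 * v))) + ennreal (1/2) * ennreal (exp ((Im (Z \<omega>))\<^sup>2 / (4 * v)))"
      unfolding A_def B_def .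
    show ?thesis unfolding e[symmetric] by (rule ennreal_leI[OF h])
  qed
  have "(\<integral>\<^sup>+\<omega>. ennreal (exp ((cmod (Z \<omega>))\<^sup>2 / (8 * v))) \<partial>P) \<le>
      (\<integral>\<^sup>+\<omega>. ennreal (1/2) * ennreal (exp ((Re (Z \<omega>))\<^sup>2 / (4 * v))) + ennreal (1/2) * ennreal (exp ((Im (Z \<omega>))\<^sup>2 / (4 * v))) \<partial>P)"
    by (intro nn_integral_mono pw)
  also have "\<dots> = ennreal (1/2) * (\<integral>\<^sup>+\<omega>. ennreal (exp ((Re (Z \<omega>))\<^sup>2 / (4 * v))) \<partial>P)
      + ennreal (1/2) * (\<integral>\<^sup>+\<omega>. ennreal (exp ((Im (Z \<omega>))\<^sup>2 / (4 * v))) \<partial>P)"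
  proof -
    have [measurable]: "Z \<in> borel_measurable P" unfolding Z_def by measurable
    show ?thesis by (simp add: nn_integral_add nn_integral_cmult)
  qed
  also have "\<dots> \<le> ennreal (1/2) * ennreal (sqrt 2) + ennreal (1/2) * ennreal (sqrt 2)"
    by (intro add_mono mult_left_mono b1 b2) auto
  also have "\<dots> = ennreal (sqrt 2)"
  proof -
    have h: "ennreal (1/2) * ennreal (sqrt 2) = ennreal (1/2 * sqrt 2)" by (rule ennreal_mult[symmetric]) auto
    have "ennreal (1/2 * sqrt 2) + ennreal (1/2 * sqrt 2) = ennreal (1/2 * sqrt 2 + 1/2 * sqrt 2)"
      by (rule ennreal_plus[symmetric]) auto
    then show ?thesis unfolding h by simp
  qed
  finally show ?thesis unfolding Z_def .
qed

lemma chernoff_block: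
  assumes P: "prob_space P"
    and gs: "\<And>m. m \<ge> 1 \<Longrightarrow> zm_ccs_gaussian_series P (y m)"
    and ac: "\<And>m n k. m \<ge> 1 \<Longrightarrow> integral\<^sup>L P (\<lambda>\<omega>. y m (n + k) \<omega> * cnj (y m n \<omega>)) = r m k"
    and indep: "prob_space.indep_vars P (\<lambda>_. Pi\<^sub>M (UNIV :: int set) (\<lambda>_. borel))
                  (\<lambda>m \<omega>. \<lambda>n. y m n \<omega>) {1..}"
    and fin: "finite T" and cb: "\<And>t. cmod (c t) \<le> 1"
    and Rb: "\<And>m F. m \<ge> 1 \<Longrightarrow> finite F \<Longrightarrow> (\<Sum>d\<in>F. cmod (r m d)) \<le> R"
    and vb: "real (card T) * R \<le> v" and vp: "0 < v"
  shows "measure P {\<omega> \<in> space P. s < (\<Sum>m\<in>{1..M}. (cmod (\<Sum>t\<in>T. c t * y m t \<omega>))\<^sup>2)}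
           \<le> exp (- s / (8 * v)) * sqrt 2 ^ M"
proof -
  interpret prob_space P by fact
  have ym[measurable]: "\<And>m t. m \<in> {1..M} \<Longrightarrow> y m t \<in> borel_measurable P"
    using gs series_meas by auto
  define W where "W m \<omega> = (cmod (\<Sum>t\<in>T. c t * y m t \<omega>))\<^sup>2" for m \<omega>
  define g where "g h = ennreal (exp ((cmod (\<Sum>t\<in>T. c t * h t))\<^sup>2 / (8 * v)))" for h :: "int \<Rightarrow> complex"
  have gm: "g \<in> borel_measurable (Pi\<^sub>M (UNIV :: int set) (\<lambda>_. borel))"
    unfolding g_def by measurable
  have ind: "indep_vars (\<lambda>_. borel) (\<lambda>m \<omega>. g (\<lambda>n. y m n \<omega>)) {1..M}"
    by (rule indep_vars_compose2[OF indep_vars_subset[OF indep]]) (use gm in auto)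
  have Wm[measurable]: "(\<lambda>\<omega>. \<Sum>m\<in>{1..M}. W m \<omega>) \<in> borel_measurable P"
    unfolding W_def by measurable
  define E where "E = {\<omega> \<in> space P. s < (\<Sum>m\<in>{1..M}. W m \<omega>)}"
  have Em: "E \<in> sets P" unfolding E_def by measurable
  define u where "u \<omega> = (\<Prod>m\<in>{1..M}. g (\<lambda>n. y m n \<omega>))" for \<omega>
  have um[measurable]: "u \<in> borel_measurable P"
  proof -
    have "(\<lambda>\<omega>. g (\<lambda>n. y m n \<omega>)) \<in> borel_measurable P" if "m \<in> {1..M}" for m
      using ind that unfolding indep_vars_def by auto
    then show ?thesis unfolding u_def by (intro borel_measurable_prod_ennreal) auto
  qed
  have u_eq: "u \<omega> = ennreal (exp ((\<Sum>m\<in>{1..M}. W m \<omega>) / (8 * v)))" for \<omega>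
    unfolding u_def g_def W_def
    by (simp add: prod_ennreal exp_sum sum_divide_distrib)
  have sub: "E \<subseteq> {\<omega> \<in> space P. 1 \<le> ennreal (exp (- s / (8 * v))) * u \<omega>}"
  proof
    fix \<omega> assume "\<omega> \<in> E"
    then have w: "\<omega> \<in> space P" "s < (\<Sum>m\<in>{1..M}. W m \<omega>)" unfolding E_def by auto
    have "1 \<le> exp (- s / (8 * v)) * exp ((\<Sum>m\<in>{1..M}. W m \<omega>) / (8 * v))"
    proof -
      have "- s / (8 * v) + (\<Sum>m\<in>{1..M}. W m \<omega>) / (8 * v) \<ge> 0"
        using w(2) vp by (simp add: field_simps)
      then show ?thesis by (simp add: exp_add[symmetric])
    qed
    then have "ennreal 1 \<le> ennreal (exp (- s / (8 * v)) * exp ((\<Sum>m\<in>{1..M}. W m \<omega>) / (8 * v)))"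
      by (rule ennreal_leI)
    then show "\<omega> \<in> {\<omega> \<in> space P. 1 \<le> ennreal (exp (- s / (8 * v))) * u \<omega>}"
      using w(1) unfolding u_eq by (simp add: ennreal_mult)
  qed
  have "emeasure P E \<le> emeasure P {\<omega> \<in> space P. 1 \<le> ennreal (exp (- s / (8 * v))) * u \<omega>}"
    by (rule emeasure_mono[OF sub]) measurable
  also have "\<dots> \<le> ennreal (exp (- s / (8 * v))) * (\<integral>\<^sup>+\<omega>. u \<omega> * indicator (space P) \<omega> \<partial>P)"
    by (rule nn_integral_Markov_inequality) auto
  also have "(\<integral>\<^sup>+\<omega>. u \<omega> * indicator (space P) \<omega> \<partial>P) = (\<integral>\<^sup>+\<omega>. u \<omega> \<partial>P)"
    by (rule nn_integral_cong) auto
  also have "\<dots> = (\<Prod>m\<in>{1..M}. \<integral>\<^sup>+\<omega>. g (\<lambda>n. y m n \<omega>) \<partial>P)"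
    unfolding u_def by (rule indep_vars_nn_integral[OF _ ind]) auto
  also have "\<dots> \<le> (\<Prod>m\<in>{1..M}. ennreal (sqrt 2))"
  proof (rule prod_mono_ennreal)
    fix m assume m: "m \<in> {1..M}"
    have "(\<integral>\<^sup>+\<omega>. g (\<lambda>n. y m n \<omega>) \<partial>P) \<le> ennreal (sqrt 2)"
      unfolding g_def
      by (rule Z_mgf[OF P gs[of m] ac[of m] fin cb Rb[of m] vb vp]) (use m in auto)
    then show "(\<integral>\<^sup>+\<omega>. g (\<lambda>n. y m n \<omega>) \<partial>P) \<le> ennreal (sqrt 2)" .
  qed
  also have "(\<Prod>m\<in>{1..M}. ennreal (sqrt 2)) = ennreal (sqrt 2 ^ M)"
    by (simp add: ennreal_power)
  finally have "emeasure P E \<le> ennreal (exp (- s / (8 * v))) * ennreal (sqrt 2 ^ M)"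
    by (simp add: mult_left_mono)
  also have "\<dots> = ennreal (exp (- s / (8 * v)) * sqrt 2 ^ M)" by (simp add: ennreal_mult)
  finally have "ennreal (measure P E) \<le> ennreal (exp (- s / (8 * v)) * sqrt 2 ^ M)"
    by (simp add: emeasure_eq_measure)
  then have "measure P E \<le> exp (- s / (8 * v)) * sqrt 2 ^ M" by simp
  then show ?thesis unfolding E_def W_def .
qed

definition ef :: "nat \<Rightarrow> nat \<Rightarrow> int \<Rightarrow> complex" where
  "ef K k s = cis (2 * pi * real k * real_of_int s / real K)"

lemma ef_mult_cnj: "ef K k s * cnj (ef K k s') = ef K k (s - s')"
  unfolding ef_def by (simp add: cis_cnj cis_mult diff_divide_distrib algebra_simps)

lemma ef_neg: "ef K k (- s) = cnj (ef K k s)"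
  unfolding ef_def by (simp add: cis_cnj)

lemma ef_add: "ef K k (s + s') = ef K k s * ef K k s'"
  unfolding ef_def by (simp add: cis_mult add_divide_distrib algebra_simps)

lemma norm_ef[simp]: "cmod (ef K k s) = 1"
  unfolding ef_def by simp

lemma ef_orth:
  assumes K: "0 < K" and d: "\<bar>d\<bar> < int K"
  shows "(\<Sum>k<K. ef K k d) = (if d = 0 then of_nat K else 0)"
proof (cases "d = 0")
  case True
  then show ?thesis by (simp add: ef_def)
next
  case False
  define z where "z = cis (2 * pi * real_of_int d / real K)"
  have zk: "ef K k d = z ^ k" for k
  proof -
    have "z ^ k = cis (real k * (2 * pi * real_of_int d / real K))" unfolding z_def by (rule Complex.DeMoivre)
    also have "real k * (2 * pi * real_of_int d / real K) = 2 * pi * real k * real_of_int d / real K" by simp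
    finally show ?thesis unfolding ef_def by (simp add: mult.commute mult.left_commute)
  qed
  have z1: "z \<noteq> 1"
  proof
    assume "z = 1"
    then have "cos (2 * pi * real_of_int d / real K) = 1"
      unfolding z_def by (metis cis.sel(1) one_complex.sel(1))
    then obtain n :: int where n: "2 * pi * real_of_int d / real K = real_of_int n * 2 * pi"
      by (auto simp: cos_one_2pi_int)
    then have "real_of_int d = real_of_int n * real K" using K by (simp add: field_simps)
    then have dn: "d = n * int K" by (metis of_int_eq_iff of_int_mult of_int_of_nat_eq)
    with False have "n \<noteq> 0" by auto
    then have "1 \<le> \<bar>n\<bar>" by simp
    then have "int K \<le> \<bar>n\<bar> * int K" using mult_right_mono[of 1 "\<bar>n\<bar>" "int K"] by simp
    then have "\<bar>n * int K\<bar> \<ge> int K" by (simp add: abs_mult)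
    with d dn show False by simp
  qed
  have zK: "z ^ K = 1"
  proof -
    have "z ^ K = cis (real K * (2 * pi * real_of_int d / real K))" unfolding z_def by (rule Complex.DeMoivre)
    also have "real K * (2 * pi * real_of_int d / real K) = 2 * pi * real_of_int d" using K by simp
    also have "cis (2 * pi * real_of_int d) = 1" by simp
    finally show ?thesis .
  qed
  have "(\<Sum>k<K. ef K k d) = (\<Sum>k<K. z ^ k)" by (simp add: zk)
  also have "\<dots> = 0" using z1 zK by (simp add: geometric_sum)
  finally show ?thesis using False by simp
qed

lemma parseval:
  fixes f :: "'i \<Rightarrow> complex" and \<phi> :: "'i \<Rightarrow> int"
  assumes K: "0 < K" and fin: "finite I" and inj: "inj_on \<phi> I"
    and dif: "\<And>i j. i \<in> I \<Longrightarrow> j \<in> I \<Longrightarrow> \<bar>\<phi> i - \<phi> j\<bar> < int K"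
  shows "(\<Sum>k<K. (cmod (\<Sum>i\<in>I. f i * ef K k (\<phi> i)))\<^sup>2) = real K * (\<Sum>i\<in>I. (cmod (f i))\<^sup>2)"
proof -
  have "complex_of_real (\<Sum>k<K. (cmod (\<Sum>i\<in>I. f i * ef K k (\<phi> i)))\<^sup>2)
      = (\<Sum>k<K. (\<Sum>i\<in>I. f i * ef K k (\<phi> i)) * cnj (\<Sum>i\<in>I. f i * ef K k (\<phi> i)))"
    unfolding of_real_sum complex_norm_square ..
  also have "\<dots> = (\<Sum>k<K. \<Sum>i\<in>I. \<Sum>j\<in>I. f i * cnj (f j) * ef K k (\<phi> i - \<phi> j))"
    by (simp add: cnj_sum sum_product ef_mult_cnj[symmetric] algebra_simps)
  also have "\<dots> = (\<Sum>i\<in>I. \<Sum>j\<in>I. f i * cnj (f j) * (\<Sum>k<K. ef K k (\<phi> i - \<phi> j)))"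
    by (simp add: sum_distrib_left sum.swap[of _ "{..<K}"])
  also have "\<dots> = (\<Sum>i\<in>I. \<Sum>j\<in>I. if j = i then f i * cnj (f i) * of_nat K else 0)"
  proof (intro sum.cong refl)
    fix i j assume ij: "i \<in> I" "j \<in> I"
    have "(\<phi> i - \<phi> j = 0) = (j = i)" using inj ij by (auto dest: inj_onD)
    then show "f i * cnj (f j) * (\<Sum>k<K. ef K k (\<phi> i - \<phi> j)) = (if j = i then f i * cnj (f i) * of_nat K else 0)"
      using ef_orth[OF K dif[OF ij]] by auto
  qed
  also have "\<dots> = (\<Sum>i\<in>I. f i * cnj (f i) * of_nat K)"
    using fin by (simp add: sum.delta)
  also have "\<dots> = complex_of_real (real K * (\<Sum>i\<in>I. (cmod (f i))\<^sup>2))"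
  proof -
    have "complex_of_real (real K * (\<Sum>i\<in>I. (cmod (f i))\<^sup>2)) = of_nat K * (\<Sum>i\<in>I. f i * cnj (f i))"
      by (simp only: of_real_mult of_real_sum complex_norm_square of_real_of_nat_eq)
    then show ?thesis by (simp add: sum_distrib_left mult.commute)
  qed
  finally show ?thesis by (simp only: of_real_eq_iff)
qed

lemma cs_complex:
  fixes b y :: "'m \<Rightarrow> complex"
  shows "(cmod (\<Sum>m\<in>A. b m * y m))\<^sup>2 \<le> (\<Sum>m\<in>A. (cmod (b m))\<^sup>2) * (\<Sum>m\<in>A. (cmod (y m))\<^sup>2)"
proof -
  have "cmod (\<Sum>m\<in>A. b m * y m) \<le> (\<Sum>m\<in>A. cmod (b m * y m))" by (rule norm_sum)
  also have "\<dots> = (\<Sum>m\<in>A. \<bar>cmod (b m)\<bar> * \<bar>cmod (y m)\<bar>)" by (simp add: norm_mult)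
  also have "\<dots> \<le> L2_set (\<lambda>m. cmod (b m)) A * L2_set (\<lambda>m. cmod (y m)) A" by (rule L2_set_mult_ineq)
  finally have h: "cmod (\<Sum>m\<in>A. b m * y m) \<le> L2_set (\<lambda>m. cmod (b m)) A * L2_set (\<lambda>m. cmod (y m)) A" .
  have "(cmod (\<Sum>m\<in>A. b m * y m))\<^sup>2 \<le> (L2_set (\<lambda>m. cmod (b m)) A * L2_set (\<lambda>m. cmod (y m)) A)\<^sup>2"
    by (rule power_mono[OF h]) simp
  also have "\<dots> = (\<Sum>m\<in>A. (cmod (b m))\<^sup>2) * (\<Sum>m\<in>A. (cmod (y m))\<^sup>2)"
    unfolding L2_set_def power_mult_distrib by (simp add: sum_nonneg)
  finally show ?thesis .
qed

lemma hankel_bound: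
  fixes a :: "nat \<Rightarrow> int \<Rightarrow> complex" and x :: "nat \<times> nat \<Rightarrow> complex" and S :: "int set"
  assumes K: "0 < K" and LK: "L < K"
    and supp: "\<And>m t. t < p \<or> q < t \<Longrightarrow> a m t = 0"
    and qp: "q - p + int L < int K"
    and finS: "finite S"
    and hyp: "\<And>k. k < K \<Longrightarrow> (\<Sum>m\<in>{1..M}. (cmod (\<Sum>t\<in>{p..q}. cnj (a m t) * ef K k t))\<^sup>2) \<le> \<beta>"
  shows "(\<Sum>s\<in>S. (cmod (\<Sum>i\<in>{1..L}\<times>{1..M}. cnj (a (snd i) (s + int (fst i))) * x i))\<^sup>2)
           \<le> \<beta> * (\<Sum>i\<in>{1..L}\<times>{1..M}. (cmod (x i))\<^sup>2)"
proof -
  define I where "I = {1..L}\<times>{1..M}"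
  define u where "u s = (\<Sum>i\<in>I. cnj (a (snd i) (s + int (fst i))) * x i)" for s
  define R where "R = {p - int L .. q - 1}"
  define B where "B m k = (\<Sum>t\<in>{p..q}. cnj (a m t) * ef K k t)" for m k
  define X where "X m k = (\<Sum>l\<in>{1..L}. x (l, m) * ef K k (- int l))" for m k
  have finI: "finite I" unfolding I_def by simp
  have u0: "u s = 0" if "s \<notin> R" for s
    unfolding u_def
  proof (intro sum.neutral ballI)
    fix i assume "i \<in> I"
    then have "1 \<le> fst i" "fst i \<le> L" unfolding I_def by auto
    then have "s + int (fst i) < p \<or> q < s + int (fst i)" using that unfolding R_def by auto
    then show "cnj (a (snd i) (s + int (fst i))) * x i = 0" using supp by simp
  qed
  have step1: "(\<Sum>s\<in>S. (cmod (u s))\<^sup>2) \<le> (\<Sum>s\<in>R. (cmod (u s))\<^sup>2)"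
  proof -
    have "(\<Sum>s\<in>S. (cmod (u s))\<^sup>2) \<le> (\<Sum>s\<in>S \<union> R. (cmod (u s))\<^sup>2)"
      by (rule sum_mono2) (use finS in \<open>auto simp: R_def\<close>)
    also have "\<dots> = (\<Sum>s\<in>R. (cmod (u s))\<^sup>2)"
      by (rule sum.mono_neutral_right) (use finS u0 in \<open>auto simp: R_def\<close>)
    finally show ?thesis .
  qed
  have pars1: "(\<Sum>k<K. (cmod (\<Sum>s\<in>R. u s * ef K k s))\<^sup>2) = real K * (\<Sum>s\<in>R. (cmod (u s))\<^sup>2)"
  proof (rule parseval[OF K])
    show "finite R" unfolding R_def by simp
    show "inj_on (\<lambda>s. s) R" by simp
    fix i j assume ij: "i \<in> R" "j \<in> R"
    then have "p - int L \<le> i" "i \<le> q - 1" "p - int L \<le> j" "j \<le> q - 1" unfolding R_def by auto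
    then have "i - j < int K" "j - i < int K" using qp by linarith+
    then show "\<bar>i - j\<bar> < int K" by (simp add: abs_less_iff)
  qed
  have hat: "(\<Sum>s\<in>R. u s * ef K k s) = (\<Sum>m\<in>{1..M}. B m k * X m k)" for k
  proof -
    have inner: "(\<Sum>s\<in>R. cnj (a m (s + int l)) * ef K k s) = ef K k (- int l) * B m k"
      if l: "1 \<le> l" "l \<le> L" for m l
    proof -
      have "(\<Sum>s\<in>R. cnj (a m (s + int l)) * ef K k s) = (\<Sum>s\<in>R. ef K k (- int l) * (cnj (a m (s + int l)) * ef K k (s + int l)))"
      proof (intro sum.cong refl)
        fix s
        have e: "ef K k s = ef K k (s + int l) * ef K k (- int l)"
          using ef_add[of K k "s + int l" "- int l"] by simp
        show "cnj (a m (s + int l)) * ef K k s = ef K k (- int l) * (cnj (a m (s + int l)) * ef K k (s + int l))"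
          by (simp only: e mult_ac)
      qed
      also have "\<dots> = ef K k (- int l) * (\<Sum>s\<in>R. cnj (a m (s + int l)) * ef K k (s + int l))"
        by (simp add: sum_distrib_left)
      also have "(\<Sum>s\<in>R. cnj (a m (s + int l)) * ef K k (s + int l)) = (\<Sum>t\<in>(\<lambda>s. s + int l) ` R. cnj (a m t) * ef K k t)"
        by (simp add: sum.reindex inj_on_def)
      also have "\<dots> = B m k"
        unfolding B_def
      proof (rule sum.mono_neutral_right)
        show "finite ((\<lambda>s. s + int l) ` R)" unfolding R_def by simp
        show "{p..q} \<subseteq> (\<lambda>s. s + int l) ` R"
        proof
          fix t assume t: "t \<in> {p..q}"
          have "t - int l \<in> R" using t l unfolding R_def by auto
          then show "t \<in> (\<lambda>s. s + int l) ` R" by (intro image_eqI[of _ _ "t - int l"]) auto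
        qed
        show "\<forall>t\<in>(\<lambda>s. s + int l) ` R - {p..q}. cnj (a m t) * ef K k t = 0"
          using supp by auto
      qed
      finally show ?thesis .
    qed
    have "(\<Sum>s\<in>R. u s * ef K k s) = (\<Sum>i\<in>I. x i * (\<Sum>s\<in>R. cnj (a (snd i) (s + int (fst i))) * ef K k s))"
      unfolding u_def by (simp add: sum_distrib_left sum_distrib_right sum.swap[of _ R] algebra_simps)
    also have "\<dots> = (\<Sum>i\<in>I. x i * (ef K k (- int (fst i)) * B (snd i) k))"
      by (intro sum.cong refl) (auto simp: I_def inner)
    also have "\<dots> = (\<Sum>l\<in>{1..L}. \<Sum>m\<in>{1..M}. x (l, m) * (ef K k (- int l) * B m k))"
      unfolding I_def by (simp add: sum.cartesian_product case_prod_unfold)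
    also have "\<dots> = (\<Sum>m\<in>{1..M}. B m k * X m k)"
      unfolding X_def sum_distrib_left by (subst sum.swap) (simp add: algebra_simps)
    finally show ?thesis .
  qed
  have pars2: "(\<Sum>k<K. (cmod (X m k))\<^sup>2) = real K * (\<Sum>l\<in>{1..L}. (cmod (x (l, m)))\<^sup>2)" for m
    unfolding X_def
  proof (rule parseval[OF K])
    show "finite {1..L}" by simp
    show "inj_on (\<lambda>l. - int l) {1..L}" by (simp add: inj_on_def)
    fix i j assume ij: "i \<in> {1..L}" "j \<in> {1..L}"
    then have "i \<le> L" "j \<le> L" "1 \<le> i" "1 \<le> j" by auto
    then have "- int i - - int j < int K" "- int j - - int i < int K" using LK by linarith+
    then show "\<bar>- int i - - int j\<bar> < int K" by (simp add: abs_less_iff)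
  qed
  have "real K * (\<Sum>s\<in>R. (cmod (u s))\<^sup>2) = (\<Sum>k<K. (cmod (\<Sum>m\<in>{1..M}. B m k * X m k))\<^sup>2)"
    using pars1 hat by simp
  also have "\<dots> \<le> (\<Sum>k<K. \<beta> * (\<Sum>m\<in>{1..M}. (cmod (X m k))\<^sup>2))"
  proof (rule sum_mono)
    fix k assume "k \<in> {..<K}"
    then have hk: "(\<Sum>m\<in>{1..M}. (cmod (B m k))\<^sup>2) \<le> \<beta>" using hyp unfolding B_def by auto
    have "(cmod (\<Sum>m\<in>{1..M}. B m k * X m k))\<^sup>2 \<le> (\<Sum>m\<in>{1..M}. (cmod (B m k))\<^sup>2) * (\<Sum>m\<in>{1..M}. (cmod (X m k))\<^sup>2)"
      by (rule cs_complex)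
    also have "\<dots> \<le> \<beta> * (\<Sum>m\<in>{1..M}. (cmod (X m k))\<^sup>2)"
      by (rule mult_right_mono[OF hk]) (simp add: sum_nonneg)
    finally show "(cmod (\<Sum>m\<in>{1..M}. B m k * X m k))\<^sup>2 \<le> \<beta> * (\<Sum>m\<in>{1..M}. (cmod (X m k))\<^sup>2)" .
  qed
  also have "\<dots> = \<beta> * (\<Sum>m\<in>{1..M}. \<Sum>k<K. (cmod (X m k))\<^sup>2)"
    by (simp add: sum_distrib_left sum.swap[of _ "{..<K}"])
  also have "\<dots> = \<beta> * (\<Sum>m\<in>{1..M}. real K * (\<Sum>l\<in>{1..L}. (cmod (x (l, m)))\<^sup>2))"
    by (simp add: pars2)
  also have "\<dots> = real K * (\<beta> * (\<Sum>i\<in>I. (cmod (x i))\<^sup>2))"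
  proof -
    have sw: "(\<Sum>m\<in>{1..M}. \<Sum>l\<in>{1..L}. (cmod (x (l, m)))\<^sup>2) = (\<Sum>i\<in>I. (cmod (x i))\<^sup>2)"
      unfolding I_def by (subst sum.swap) (simp add: sum.cartesian_product case_prod_unfold)
    have "(\<Sum>m\<in>{1..M}. real K * (\<Sum>l\<in>{1..L}. (cmod (x (l, m)))\<^sup>2)) = real K * (\<Sum>m\<in>{1..M}. \<Sum>l\<in>{1..L}. (cmod (x (l, m)))\<^sup>2)"
      by (rule sum_distrib_left[symmetric])
    then show ?thesis unfolding sw by simp
  qed
  finally have "(\<Sum>s\<in>R. (cmod (u s))\<^sup>2) \<le> \<beta> * (\<Sum>i\<in>I. (cmod (x i))\<^sup>2)"
    using K by simp
  with step1 show ?thesis unfolding u_def I_def by simp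
qed

lemma gram_op_bound:
  fixes V :: "'i \<Rightarrow> 'j \<Rightarrow> complex" and x :: "'i \<Rightarrow> complex"
  assumes finI: "finite I" and finJ: "finite J" and bp: "0 \<le> \<beta>"
    and hyp: "\<And>z. (\<Sum>j\<in>J. (cmod (\<Sum>i\<in>I. cnj (V i j) * z i))\<^sup>2) \<le> \<beta> * (\<Sum>i\<in>I. (cmod (z i))\<^sup>2)"
  shows "L2_set (\<lambda>i. cmod (\<Sum>i'\<in>I. gram J V i i' * x i')) I \<le> \<beta> * L2_set (\<lambda>i. cmod (x i)) I"
proof -
  define w where "w j = (\<Sum>i'\<in>I. cnj (V i' j) * x i')" for j
  define y where "y i = (\<Sum>i'\<in>I. gram J V i i' * x i')" for i
  define u where "u j = (\<Sum>i\<in>I. cnj (V i j) * y i)" for j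
  have yw: "y i = (\<Sum>j\<in>J. V i j * w j)" for i
    unfolding y_def w_def gram_def
    by (simp add: sum_distrib_left sum_distrib_right sum.swap[of _ I] mult.assoc)
  have "complex_of_real ((L2_set (\<lambda>i. cmod (y i)) I)\<^sup>2) = (\<Sum>i\<in>I. y i * cnj (y i))"
  proof -
    have h: "(L2_set (\<lambda>i. cmod (y i)) I)\<^sup>2 = (\<Sum>i\<in>I. (cmod (y i))\<^sup>2)"
      unfolding L2_set_def by (simp add: sum_nonneg)
    show ?thesis unfolding h of_real_sum complex_norm_square ..
  qed
  also have "\<dots> = (\<Sum>i\<in>I. \<Sum>j\<in>J. V i j * w j * cnj (y i))"
    unfolding yw by (simp add: sum_distrib_right)
  also have "\<dots> = (\<Sum>j\<in>J. w j * cnj (u j))"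
    unfolding u_def by (subst sum.swap) (simp add: sum_distrib_left mult_ac)
  finally have e: "complex_of_real ((L2_set (\<lambda>i. cmod (y i)) I)\<^sup>2) = (\<Sum>j\<in>J. w j * cnj (u j))" .
  have "(L2_set (\<lambda>i. cmod (y i)) I)\<^sup>2 = cmod (\<Sum>j\<in>J. w j * cnj (u j))"
    using arg_cong[OF e, of cmod] by (simp add: norm_power)
  also have "\<dots> \<le> (\<Sum>j\<in>J. \<bar>cmod (w j)\<bar> * \<bar>cmod (u j)\<bar>)"
    by (rule order.trans[OF norm_sum]) (simp add: norm_mult)
  also have "\<dots> \<le> L2_set (\<lambda>j. cmod (w j)) J * L2_set (\<lambda>j. cmod (u j)) J"
    by (rule L2_set_mult_ineq)
  finally have y2: "(L2_set (\<lambda>i. cmod (y i)) I)\<^sup>2 \<le> L2_set (\<lambda>j. cmod (w j)) J * L2_set (\<lambda>j. cmod (u j)) J" .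
  have L2b: "L2_set (\<lambda>j. cmod (\<Sum>i\<in>I. cnj (V i j) * z i)) J \<le> sqrt \<beta> * L2_set (\<lambda>i. cmod (z i)) I" for z
  proof -
    have "L2_set (\<lambda>j. cmod (\<Sum>i\<in>I. cnj (V i j) * z i)) J \<le> sqrt (\<beta> * (\<Sum>i\<in>I. (cmod (z i))\<^sup>2))"
      unfolding L2_set_def by (rule real_sqrt_le_mono[OF hyp])
    also have "\<dots> = sqrt \<beta> * L2_set (\<lambda>i. cmod (z i)) I" unfolding L2_set_def by (simp add: real_sqrt_mult)
    finally show ?thesis .
  qed
  have wb: "L2_set (\<lambda>j. cmod (w j)) J \<le> sqrt \<beta> * L2_set (\<lambda>i. cmod (x i)) I"
    unfolding w_def by (rule L2b)
  have ub: "L2_set (\<lambda>j. cmod (u j)) J \<le> sqrt \<beta> * L2_set (\<lambda>i. cmod (y i)) I"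
    unfolding u_def by (rule L2b)
  define Y where "Y = L2_set (\<lambda>i. cmod (y i)) I"
  define Wn where "Wn = L2_set (\<lambda>j. cmod (w j)) J"
  have Y0: "0 \<le> Y" and W0: "0 \<le> Wn" unfolding Y_def Wn_def by simp_all
  have "Y\<^sup>2 \<le> Wn * (sqrt \<beta> * Y)"
    using y2 ub W0 unfolding Y_def Wn_def by (meson order.trans mult_left_mono)
  then have "Y \<le> sqrt \<beta> * Wn"
  proof (cases "Y = 0")
    case True then show ?thesis using W0 bp by simp
  next
    case False
    then have "0 < Y" using Y0 by simp
    moreover have "Y * Y \<le> (sqrt \<beta> * Wn) * Y" using \<open>Y\<^sup>2 \<le> _\<close> by (simp add: power2_eq_square mult_ac)
    ultimately show ?thesis by simp
  qed
  also have "\<dots> \<le> sqrt \<beta> * (sqrt \<beta> * L2_set (\<lambda>i. cmod (x i)) I)"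
    using wb bp unfolding Wn_def by (intro mult_left_mono) simp_all
  also have "\<dots> = \<beta> * L2_set (\<lambda>i. cmod (x i)) I" using bp by (simp add: mult.assoc[symmetric])
  finally show ?thesis unfolding Y_def y_def .
qed

definition Vm :: "(nat \<Rightarrow> int \<Rightarrow> 'a \<Rightarrow> complex) \<Rightarrow> nat \<Rightarrow> (int \<Rightarrow> bool) \<Rightarrow> 'a \<Rightarrow> nat \<times> nat \<Rightarrow> int \<Rightarrow> complex" where
  "Vm y N ch \<omega> i s = (if ch (s + int (fst i)) then y (snd i) (s + int (fst i)) \<omega> / complex_of_real (sqrt (real N)) else 0)"

definition aw :: "(nat \<Rightarrow> int \<Rightarrow> 'a \<Rightarrow> complex) \<Rightarrow> nat \<Rightarrow> (int \<Rightarrow> bool) \<Rightarrow> int \<Rightarrow> int \<Rightarrow> 'a \<Rightarrow> nat \<Rightarrow> int \<Rightarrow> complex" where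
  "aw y N ch p q \<omega> m t = (if p \<le> t \<and> t \<le> q \<and> ch t then y m t \<omega> / complex_of_real (sqrt (real N)) else 0)"

lemma aw_coef:
  assumes N: "0 < N"
  shows "(cmod (\<Sum>t\<in>{p..q}. cnj (aw y N ch p q \<omega> m t) * ef K k t))\<^sup>2
       = (cmod (\<Sum>t\<in>{p..q}. (if ch t then cnj (ef K k t) else 0) * y m t \<omega>))\<^sup>2 / real N"
proof -
  have "(\<Sum>t\<in>{p..q}. cnj (aw y N ch p q \<omega> m t) * ef K k t)
      = cnj ((\<Sum>t\<in>{p..q}. (if ch t then cnj (ef K k t) else 0) * y m t \<omega>) / complex_of_real (sqrt (real N)))"
    unfolding aw_def by (simp add: sum_divide_distrib if_distrib if_distribR mult.commute cong: if_cong)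
  then have "cmod (\<Sum>t\<in>{p..q}. cnj (aw y N ch p q \<omega> m t) * ef K k t)
      = cmod (\<Sum>t\<in>{p..q}. (if ch t then cnj (ef K k t) else 0) * y m t \<omega>) / sqrt (real N)"
    by (simp only: complex_mod_cnj norm_divide norm_of_real) simp
  then show ?thesis using N by (simp add: power_divide)
qed

lemma block_bound:
  fixes y :: "nat \<Rightarrow> int \<Rightarrow> 'a \<Rightarrow> complex"
  assumes N: "0 < N" and L: "1 \<le> L" and bp: "0 \<le> \<beta>"
    and win: "\<And>s l. s \<in> S \<Longrightarrow> 1 \<le> l \<Longrightarrow> l \<le> L \<Longrightarrow> p \<le> s + int l \<and> s + int l \<le> q"
    and finS: "finite S"
    and qp: "q - p + int L < int (3 * L)"
    and hyp: "\<And>k. k < 3 * L \<Longrightarrow>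
       (\<Sum>m\<in>{1..M}. (cmod (\<Sum>t\<in>{p..q}. (if ch t then cnj (ef (3 * L) k t) else 0) * y m t \<omega>))\<^sup>2) \<le> real N * \<beta>"
  shows "L2_set (\<lambda>i. cmod (\<Sum>i'\<in>{1..L}\<times>{1..M}. gram S (Vm y N ch \<omega>) i i' * x i')) ({1..L}\<times>{1..M})
           \<le> \<beta> * L2_set (\<lambda>i. cmod (x i)) ({1..L}\<times>{1..M})"
proof -
  define I where "I = {1..L}\<times>{1..M}"
  define a where "a = aw y N ch p q \<omega>"
  define V where "V i s = a (snd i) (s + int (fst i))" for i s
  have VV: "Vm y N ch \<omega> i s = V i s" if "i \<in> I" "s \<in> S" for i s
  proof -
    have "p \<le> s + int (fst i) \<and> s + int (fst i) \<le> q" using win[OF that(2)] that(1) unfolding I_def by auto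
    then show ?thesis unfolding V_def a_def aw_def Vm_def by simp
  qed
  have gg: "gram S (Vm y N ch \<omega>) i i' = gram S V i i'" if "i \<in> I" "i' \<in> I" for i i'
    unfolding gram_def using VV that by simp
  have K: "0 < 3 * L" using L by simp
  have LK: "L < 3 * L" using L by simp
  have supp: "\<And>m t. t < p \<or> q < t \<Longrightarrow> a m t = 0" unfolding a_def aw_def by auto
  have hyp': "(\<Sum>m\<in>{1..M}. (cmod (\<Sum>t\<in>{p..q}. cnj (a m t) * ef (3 * L) k t))\<^sup>2) \<le> \<beta>" if "k < 3 * L" for k
  proof -
    have "(\<Sum>m\<in>{1..M}. (cmod (\<Sum>t\<in>{p..q}. cnj (a m t) * ef (3 * L) k t))\<^sup>2)
        = (\<Sum>m\<in>{1..M}. (cmod (\<Sum>t\<in>{p..q}. (if ch t then cnj (ef (3 * L) k t) else 0) * y m t \<omega>))\<^sup>2) / real N"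
      unfolding a_def aw_coef[OF N] by (simp add: sum_divide_distrib)
    also have "\<dots> \<le> (real N * \<beta>) / real N" by (rule divide_right_mono[OF hyp[OF that]]) simp
    also have "\<dots> = \<beta>" using N by simp
    finally show ?thesis .
  qed
  have hb: "(\<Sum>s\<in>S. (cmod (\<Sum>i\<in>I. cnj (V i s) * z i))\<^sup>2) \<le> \<beta> * (\<Sum>i\<in>I. (cmod (z i))\<^sup>2)" for z
    unfolding V_def I_def by (rule hankel_bound[OF K LK supp qp finS hyp'])
  have "L2_set (\<lambda>i. cmod (\<Sum>i'\<in>I. gram S (Vm y N ch \<omega>) i i' * x i')) I
      = L2_set (\<lambda>i. cmod (\<Sum>i'\<in>I. gram S V i i' * x i')) I"
    by (intro L2_set_cong refl arg_cong[where f=cmod] sum.cong) (simp add: gg)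
  also have "\<dots> \<le> \<beta> * L2_set (\<lambda>i. cmod (x i)) I"
    by (rule gram_op_bound[OF _ finS bp hb]) (simp add: I_def)
  finally show ?thesis unfolding I_def .
qed

lemma image_shift_nat:
  fixes a :: int
  shows "(\<lambda>n::nat. int n - a) ` {lo..hi} = {int lo - a..int hi - a}"
proof
  show "(\<lambda>n::nat. int n - a) ` {lo..hi} \<subseteq> {int lo - a..int hi - a}" by auto
  show "{int lo - a..int hi - a} \<subseteq> (\<lambda>n::nat. int n - a) ` {lo..hi}"
  proof
    fix s assume s: "s \<in> {int lo - a..int hi - a}"
    then have "s + a \<ge> 0" by auto
    then have "s = int (nat (s + a)) - a" by simp
    moreover have "nat (s + a) \<in> {lo..hi}" using s by auto
    ultimately show "s \<in> (\<lambda>n::nat. int n - a) ` {lo..hi}" by blast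
  qed
qed

lemma sum_shift_nat:
  fixes g :: "int \<Rightarrow> complex" and a :: int
  shows "(\<Sum>n\<in>{lo..hi}. g (int n - a)) = (\<Sum>s\<in>{int lo - a..int hi - a}. g s)"
proof -
  have "inj_on (\<lambda>n::nat. int n - a) {lo..hi}" by (auto simp: inj_on_def)
  then have "(\<Sum>s\<in>(\<lambda>n::nat. int n - a) ` {lo..hi}. g s) = (\<Sum>n\<in>{lo..hi}. g (int n - a))"
    by (simp add: sum.reindex)
  then show ?thesis unfolding image_shift_nat by simp
qed

lemma gramW:
  "gram {1..N} (W_mat y N \<omega>) i i' = gram {0..int N - 1} (Vm y N (\<lambda>_. True) \<omega>) i i'"
proof -
  have "gram {1..N} (W_mat y N \<omega>) i i' = (\<Sum>n\<in>{1..N}. (\<lambda>s. Vm y N (\<lambda>_. True) \<omega> i s * cnj (Vm y N (\<lambda>_. True) \<omega> i' s)) (int n - 1))"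
    unfolding gram_def W_mat_def Vm_def by (simp add: algebra_simps)
  also have "\<dots> = (\<Sum>s\<in>{int 1 - 1..int N - 1}. Vm y N (\<lambda>_. True) \<omega> i s * cnj (Vm y N (\<lambda>_. True) \<omega> i' s))"
    by (rule sum_shift_nat)
  also have "\<dots> = gram {0..int N - 1} (Vm y N (\<lambda>_. True) \<omega>) i i'"
    unfolding gram_def by simp
  finally show ?thesis .
qed

lemma gramWt:
  assumes L: "1 \<le> L"
  shows "gram {1..N + L - 1} (Wt_mat y N L \<omega>) i i'
       = gram {1 - int L..int N - 1} (Vm y N (\<lambda>t. 1 \<le> t \<and> t \<le> int N) \<omega>) i i'"
proof -
  let ?V = "Vm y N (\<lambda>t. 1 \<le> t \<and> t \<le> int N) \<omega>"
  have "gram {1..N + L - 1} (Wt_mat y N L \<omega>) i i' = (\<Sum>n\<in>{1..N + L - 1}. (\<lambda>s. ?V i s * cnj (?V i' s)) (int n - int L))"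
  proof -
    have e: "\<And>n l. int n - int L + int l = int n + int l - int L" by simp
    show ?thesis unfolding gram_def Wt_mat_def Vm_def Let_def by (simp add: e cong: if_cong)
  qed
  also have "\<dots> = (\<Sum>s\<in>{int 1 - int L..int (N + L - 1) - int L}. ?V i s * cnj (?V i' s))"
    by (rule sum_shift_nat)
  also have "{int 1 - int L..int (N + L - 1) - int L} = {1 - int L..int N - 1}" using L by auto
  finally show ?thesis unfolding gram_def .
qed

lemma gram_decomp:
  assumes L: "1 \<le> L" "L \<le> N" and i: "1 \<le> fst i" "fst i \<le> L" and i': "1 \<le> fst i'" "fst i' \<le> L"
  shows "gram {0..int N - 1} (Vm y N (\<lambda>_. True) \<omega>) i i'
           - gram {1 - int L..int N - 1} (Vm y N (\<lambda>t. 1 \<le> t \<and> t \<le> int N) \<omega>) i i'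
         = gram {int N - int L + 1..int N - 1} (Vm y N (\<lambda>_. True) \<omega>) i i'
           - gram {int N - int L + 1..int N - 1} (Vm y N (\<lambda>t. 1 \<le> t \<and> t \<le> int N) \<omega>) i i'
           - gram {1 - int L..-1} (Vm y N (\<lambda>t. 1 \<le> t \<and> t \<le> int N) \<omega>) i i'"
proof -
  let ?V1 = "Vm y N (\<lambda>_. True) \<omega>" and ?V2 = "Vm y N (\<lambda>t. 1 \<le> t \<and> t \<le> int N) \<omega>"
  define C where "C = {0..int N - int L}"
  define S1 where "S1 = {int N - int L + 1..int N - 1}"
  define S2 where "S2 = {1 - int L..-1::int}"
  have A: "{0..int N - 1} = C \<union> S1" unfolding C_def S1_def using L by auto
  have B: "{1 - int L..int N - 1} = S2 \<union> (C \<union> S1)" unfolding C_def S1_def S2_def using L by auto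
  have d1: "C \<inter> S1 = {}" "S2 \<inter> (C \<union> S1) = {}" unfolding C_def S1_def S2_def using L by auto
  have fin: "finite C" "finite S1" "finite S2" unfolding C_def S1_def S2_def by auto
  have CC: "gram C ?V1 i i' = gram C ?V2 i i'"
    unfolding gram_def
  proof (intro sum.cong refl)
    fix s assume s: "s \<in> C"
    have "1 \<le> s + int (fst i) \<and> s + int (fst i) \<le> int N" "1 \<le> s + int (fst i') \<and> s + int (fst i') \<le> int N"
      using s i i' unfolding C_def by auto
    then show "?V1 i s * cnj (?V1 i' s) = ?V2 i s * cnj (?V2 i' s)" unfolding Vm_def by simp
  qed
  have "gram {0..int N - 1} ?V1 i i' = gram C ?V1 i i' + gram S1 ?V1 i i'"
    unfolding A gram_def using fin d1 by (simp add: sum.union_disjoint)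
  moreover have "gram {1 - int L..int N - 1} ?V2 i i' = gram S2 ?V2 i i' + (gram C ?V2 i i' + gram S1 ?V2 i i')"
    unfolding B gram_def using fin d1 by (simp add: sum.union_disjoint)
  ultimately show ?thesis using CC unfolding S1_def S2_def by simp
qed

lemma L2_set_triangle3:
  "L2_set (\<lambda>i. f i + g i + h i) A \<le> L2_set f A + L2_set g A + L2_set h A"
  by (rule order.trans[OF L2_set_triangle_ineq]) (simp add: L2_set_triangle_ineq)

lemma opnorm_det:
  fixes y :: "nat \<Rightarrow> int \<Rightarrow> 'a \<Rightarrow> complex"
  assumes L: "1 \<le> L" "L \<le> N" and \<alpha>: "0 \<le> \<alpha>"
    and g1: "\<And>k. k < 3 * L \<Longrightarrow> (\<Sum>m\<in>{1..M}. (cmod (\<Sum>t\<in>{int N - int L + 2..int N + int L - 1}.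
          (if (\<lambda>_. True) t then cnj (ef (3 * L) k t) else 0) * y m t \<omega>))\<^sup>2) \<le> real N * (\<alpha> / 3)"
    and g2: "\<And>k. k < 3 * L \<Longrightarrow> (\<Sum>m\<in>{1..M}. (cmod (\<Sum>t\<in>{int N - int L + 2..int N + int L - 1}.
          (if (\<lambda>t. 1 \<le> t \<and> t \<le> int N) t then cnj (ef (3 * L) k t) else 0) * y m t \<omega>))\<^sup>2) \<le> real N * (\<alpha> / 3)"
    and g3: "\<And>k. k < 3 * L \<Longrightarrow> (\<Sum>m\<in>{1..M}. (cmod (\<Sum>t\<in>{2 - int L..int L - 1}.
          (if (\<lambda>t. 1 \<le> t \<and> t \<le> int N) t then cnj (ef (3 * L) k t) else 0) * y m t \<omega>))\<^sup>2) \<le> real N * (\<alpha> / 3)"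
  shows "opnorm ({1..L}\<times>{1..M}) ({1..L}\<times>{1..M})
           (\<lambda>i i'. gram {1..N} (W_mat y N \<omega>) i i' - gram {1..N + L - 1} (Wt_mat y N L \<omega>) i i') \<le> \<alpha>"
proof -
  define I where "I = {1..L}\<times>{1..M}"
  have N: "0 < N" using L by simp
  define ch where "ch = (\<lambda>t. 1 \<le> t \<and> t \<le> int N)"
  define S1 where "S1 = {int N - int L + 1..int N - 1}"
  define S2 where "S2 = {1 - int L..-1::int}"
  define G1 where "G1 = gram S1 (Vm y N (\<lambda>_. True) \<omega>)"
  define G2 where "G2 = gram S1 (Vm y N ch \<omega>)"
  define G3 where "G3 = gram S2 (Vm y N ch \<omega>)"
  define D where "D = (\<lambda>i i'. gram {1..N} (W_mat y N \<omega>) i i' - gram {1..N + L - 1} (Wt_mat y N L \<omega>) i i')"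
  have Deq: "D i i' = G1 i i' - G2 i i' - G3 i i'" if "i \<in> I" "i' \<in> I" for i i'
    unfolding D_def gramW gramWt[OF L(1)] G1_def G2_def G3_def S1_def S2_def ch_def
    by (rule gram_decomp[OF L]) (use that in \<open>auto simp: I_def\<close>)
  have a3: "0 \<le> \<alpha> / 3" using \<alpha> by simp
  have bb1: "L2_set (\<lambda>i. cmod (\<Sum>i'\<in>I. G1 i i' * x i')) I \<le> \<alpha> / 3 * L2_set (\<lambda>i. cmod (x i)) I" for x
    unfolding G1_def I_def
    by (rule block_bound[where p="int N - int L + 2" and q="int N + int L - 1" and ch="\<lambda>_. True" and y=y and \<omega>=\<omega> and M=M, OF N L(1) a3 _ _ _ g1])
       (auto simp: S1_def)
  have bb2: "L2_set (\<lambda>i. cmod (\<Sum>i'\<in>I. G2 i i' * x i')) I \<le> \<alpha> / 3 * L2_set (\<lambda>i. cmod (x i)) I" for x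
    unfolding G2_def I_def ch_def
    by (rule block_bound[where p="int N - int L + 2" and q="int N + int L - 1" and ch="\<lambda>t. 1 \<le> t \<and> t \<le> int N" and y=y and \<omega>=\<omega> and M=M, OF N L(1) a3 _ _ _ g2])
       (auto simp: S1_def)
  have bb3: "L2_set (\<lambda>i. cmod (\<Sum>i'\<in>I. G3 i i' * x i')) I \<le> \<alpha> / 3 * L2_set (\<lambda>i. cmod (x i)) I" for x
    unfolding G3_def I_def ch_def
    by (rule block_bound[where p="2 - int L" and q="int L - 1" and ch="\<lambda>t. 1 \<le> t \<and> t \<le> int N" and y=y and \<omega>=\<omega> and M=M, OF N L(1) a3 _ _ _ g3])
       (auto simp: S2_def)
  have main: "sqrt (\<Sum>i\<in>I. (cmod (\<Sum>j\<in>I. D i j * x j))\<^sup>2) \<le> \<alpha>"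
    if x: "(\<Sum>j\<in>I. (cmod (x j))\<^sup>2) \<le> 1" for x
  proof -
    have x1: "L2_set (\<lambda>i. cmod (x i)) I \<le> 1" unfolding L2_set_def using x by simp
    have "sqrt (\<Sum>i\<in>I. (cmod (\<Sum>j\<in>I. D i j * x j))\<^sup>2) = L2_set (\<lambda>i. cmod (\<Sum>j\<in>I. D i j * x j)) I"
      unfolding L2_set_def ..
    also have "\<dots> \<le> L2_set (\<lambda>i. cmod (\<Sum>j\<in>I. G1 i j * x j) + cmod (\<Sum>j\<in>I. G2 i j * x j) + cmod (\<Sum>j\<in>I. G3 i j * x j)) I"
    proof (rule L2_set_mono)
      fix i assume i: "i \<in> I"
      have "(\<Sum>j\<in>I. D i j * x j) = (\<Sum>j\<in>I. G1 i j * x j) - (\<Sum>j\<in>I. G2 i j * x j) - (\<Sum>j\<in>I. G3 i j * x j)"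
      proof -
        have "(\<Sum>j\<in>I. D i j * x j) = (\<Sum>j\<in>I. G1 i j * x j - G2 i j * x j - G3 i j * x j)"
        proof (intro sum.cong refl)
          fix j assume j: "j \<in> I"
          show "D i j * x j = G1 i j * x j - G2 i j * x j - G3 i j * x j"
            unfolding Deq[OF i j] by (simp add: left_diff_distrib)
        qed
        then show ?thesis by (simp add: sum_subtractf)
      qed
      then show "cmod (\<Sum>j\<in>I. D i j * x j) \<le> cmod (\<Sum>j\<in>I. G1 i j * x j) + cmod (\<Sum>j\<in>I. G2 i j * x j) + cmod (\<Sum>j\<in>I. G3 i j * x j)"
        using norm_triangle_ineq4[of "(\<Sum>j\<in>I. G1 i j * x j) - (\<Sum>j\<in>I. G2 i j * x j)" "\<Sum>j\<in>I. G3 i j * x j"]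
          norm_triangle_ineq4[of "\<Sum>j\<in>I. G1 i j * x j" "\<Sum>j\<in>I. G2 i j * x j"] by simp
    qed simp
    also have "\<dots> \<le> L2_set (\<lambda>i. cmod (\<Sum>j\<in>I. G1 i j * x j)) I + L2_set (\<lambda>i. cmod (\<Sum>j\<in>I. G2 i j * x j)) I
                     + L2_set (\<lambda>i. cmod (\<Sum>j\<in>I. G3 i j * x j)) I"
      by (rule L2_set_triangle3)
    also have "\<dots> \<le> \<alpha> / 3 * L2_set (\<lambda>i. cmod (x i)) I + \<alpha> / 3 * L2_set (\<lambda>i. cmod (x i)) I + \<alpha> / 3 * L2_set (\<lambda>i. cmod (x i)) I"
      by (intro add_mono bb1 bb2 bb3)
    also have "\<dots> \<le> \<alpha> / 3 * 1 + \<alpha> / 3 * 1 + \<alpha> / 3 * 1"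
      by (intro add_mono mult_left_mono x1 a3)
    also have "\<dots> = \<alpha>" by simp
    finally show ?thesis .
  qed
  show ?thesis
    unfolding opnorm_def D_def[symmetric] I_def[symmetric]
  proof (rule cSup_least)
    show "{sqrt (\<Sum>i\<in>I. (cmod (\<Sum>j\<in>I. D i j * x j))\<^sup>2) | x. (\<Sum>j\<in>I. (cmod (x j))\<^sup>2) \<le> 1} \<noteq> {}"
    proof -
      have h: "(\<Sum>j\<in>I. (cmod ((\<lambda>_. 0::complex) j))\<^sup>2) \<le> 1" by simp
      have "sqrt (\<Sum>i\<in>I. (cmod (\<Sum>j\<in>I. D i j * (\<lambda>_. 0::complex) j))\<^sup>2)
         \<in> {sqrt (\<Sum>i\<in>I. (cmod (\<Sum>j\<in>I. D i j * x j))\<^sup>2) | x. (\<Sum>j\<in>I. (cmod (x j))\<^sup>2) \<le> 1}"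
        by (rule CollectI, rule exI[of _ "\<lambda>_. 0"], rule conjI[OF refl h])
      then show ?thesis by (metis empty_iff)
    qed
    fix v assume "v \<in> {sqrt (\<Sum>i\<in>I. (cmod (\<Sum>j\<in>I. D i j * x j))\<^sup>2) | x. (\<Sum>j\<in>I. (cmod (x j))\<^sup>2) \<le> 1}"
    then obtain x where "v = sqrt (\<Sum>i\<in>I. (cmod (\<Sum>j\<in>I. D i j * x j))\<^sup>2)" "(\<Sum>j\<in>I. (cmod (x j))\<^sup>2) \<le> 1" by blast
    then show "v \<le> \<alpha>" using main by simp
  qed
qed

lemma fixed_N_bound:
  fixes P :: "'a measure" and y :: "nat \<Rightarrow> int \<Rightarrow> 'a \<Rightarrow> complex" and r :: "nat \<Rightarrow> int \<Rightarrow> complex"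
    and M L N :: nat
  assumes prob: "prob_space P"
    and gs: "\<And>m. m \<ge> 1 \<Longrightarrow> zm_ccs_gaussian_series P (y m)"
    and ac: "\<And>m n k. m \<ge> 1 \<Longrightarrow> integral\<^sup>L P (\<lambda>\<omega>. y m (n + k) \<omega> * cnj (y m n \<omega>)) = r m k"
    and indep: "prob_space.indep_vars P (\<lambda>_. Pi\<^sub>M (UNIV :: int set) (\<lambda>_. borel))
                  (\<lambda>m \<omega>. \<lambda>n. y m n \<omega>) {1..}"
    and Rb: "\<And>m F. m \<ge> 1 \<Longrightarrow> finite F \<Longrightarrow> (\<Sum>d\<in>F. cmod (r m d)) \<le> R"
    and Rp: "0 < R"
    and L: "1 \<le> L" "L \<le> N" and \<alpha>: "0 \<le> \<alpha>"
  shows "measure P {\<omega> \<in> space P.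
             opnorm ({1..L} \<times> {1..M}) ({1..L} \<times> {1..M})
               (\<lambda>i i'. gram {1..N} (W_mat y N \<omega>) i i'
                       - gram {1..N + L - 1} (Wt_mat y N L \<omega>) i i') > \<alpha>}
         \<le> real (9 * L) * (exp (- (real N * (\<alpha> / 3)) / (8 * (2 * real L * R))) * sqrt 2 ^ M)"
proof -
  interpret prob_space P by fact
  have ym[measurable]: "\<And>m t. m \<in> {1..M} \<Longrightarrow> y m t \<in> borel_measurable P"
    using gs series_meas by auto
  define chN where "chN = (\<lambda>t. 1 \<le> t \<and> t \<le> int N)"
  define pp where "pp b = (if b = (3::nat) then 2 - int L else int N - int L + 2)" for b
  define qq where "qq b = (if b = (3::nat) then int L - 1 else int N + int L - 1)" for b
  define chb where "chb b = (if b = (1::nat) then (\<lambda>_. True) else chN)" for b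
  define cc where "cc b k t = (if chb b t then cnj (ef (3 * L) k t) else 0)" for b k t
  define s where "s = real N * (\<alpha> / 3)"
  define v where "v = 2 * real L * R"
  define E where "E b k = {\<omega> \<in> space P. s < (\<Sum>m\<in>{1..M}. (cmod (\<Sum>t\<in>{pp b..qq b}. cc b k t * y m t \<omega>))\<^sup>2)}" for b k
  define BB where "BB = {1,2,3::nat} \<times> {..<3 * L}"
  have Em: "E b k \<in> sets P" for b k unfolding E_def by measurable
  have vp: "0 < v" unfolding v_def using L Rp by simp
  have cardT: "real (card {pp b..qq b}) * R \<le> v" for b
  proof -
    have "card {pp b..qq b} \<le> 2 * L" unfolding pp_def qq_def using L by auto
    then have "real (card {pp b..qq b}) \<le> 2 * real L" by linarith
    then show ?thesis unfolding v_def using Rp by (simp add: mult_right_mono)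
  qed
  have Ebound: "measure P (E b k) \<le> exp (- s / (8 * v)) * sqrt 2 ^ M" for b k
    unfolding E_def
    by (rule chernoff_block[OF prob gs ac indep _ _ Rb cardT vp]) (auto simp: cc_def)
  have sub: "{\<omega> \<in> space P.
             opnorm ({1..L} \<times> {1..M}) ({1..L} \<times> {1..M})
               (\<lambda>i i'. gram {1..N} (W_mat y N \<omega>) i i'
                       - gram {1..N + L - 1} (Wt_mat y N L \<omega>) i i') > \<alpha>} \<subseteq> (\<Union>bk\<in>BB. E (fst bk) (snd bk))"
  proof
    fix \<omega> assume w: "\<omega> \<in> {\<omega> \<in> space P.
             opnorm ({1..L} \<times> {1..M}) ({1..L} \<times> {1..M})
               (\<lambda>i i'. gram {1..N} (W_mat y N \<omega>) i i'
                       - gram {1..N + L - 1} (Wt_mat y N L \<omega>) i i') > \<alpha>}"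
    show "\<omega> \<in> (\<Union>bk\<in>BB. E (fst bk) (snd bk))"
    proof (rule ccontr)
      assume "\<omega> \<notin> (\<Union>bk\<in>BB. E (fst bk) (snd bk))"
      then have nE: "\<And>b k. b \<in> {1,2,3} \<Longrightarrow> k < 3 * L \<Longrightarrow> \<omega> \<notin> E b k" unfolding BB_def by fastforce
      have good: "(\<Sum>m\<in>{1..M}. (cmod (\<Sum>t\<in>{pp b..qq b}. cc b k t * y m t \<omega>))\<^sup>2) \<le> real N * (\<alpha> / 3)"
        if "b \<in> {1,2,3}" "k < 3 * L" for b k
        using nE[OF that] w unfolding E_def s_def by auto
      have g1: "(\<Sum>m\<in>{1..M}. (cmod (\<Sum>t\<in>{int N - int L + 2..int N + int L - 1}.
          (if (\<lambda>_. True) t then cnj (ef (3 * L) k t) else 0) * y m t \<omega>))\<^sup>2) \<le> real N * (\<alpha> / 3)"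
        if "k < 3 * L" for k
        using good[of 1 k] that unfolding pp_def qq_def cc_def chb_def by simp
      have g2: "(\<Sum>m\<in>{1..M}. (cmod (\<Sum>t\<in>{int N - int L + 2..int N + int L - 1}.
          (if (\<lambda>t. 1 \<le> t \<and> t \<le> int N) t then cnj (ef (3 * L) k t) else 0) * y m t \<omega>))\<^sup>2) \<le> real N * (\<alpha> / 3)"
        if "k < 3 * L" for k
        using good[of 2 k] that unfolding pp_def qq_def cc_def chb_def chN_def by simp
      have g3: "(\<Sum>m\<in>{1..M}. (cmod (\<Sum>t\<in>{2 - int L..int L - 1}.
          (if (\<lambda>t. 1 \<le> t \<and> t \<le> int N) t then cnj (ef (3 * L) k t) else 0) * y m t \<omega>))\<^sup>2) \<le> real N * (\<alpha> / 3)"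
        if "k < 3 * L" for k
        using good[of 3 k] that unfolding pp_def qq_def cc_def chb_def chN_def by simp
      have "opnorm ({1..L} \<times> {1..M}) ({1..L} \<times> {1..M})
           (\<lambda>i i'. gram {1..N} (W_mat y N \<omega>) i i' - gram {1..N + L - 1} (Wt_mat y N L \<omega>) i i') \<le> \<alpha>"
        by (rule opnorm_det[where y=y and \<omega>=\<omega> and M=M, OF L \<alpha> g1 g2 g3])
      with w show False by simp
    qed
  qed
  have finBB: "finite BB" unfolding BB_def by simp
  have "measure P {\<omega> \<in> space P.
             opnorm ({1..L} \<times> {1..M}) ({1..L} \<times> {1..M})
               (\<lambda>i i'. gram {1..N} (W_mat y N \<omega>) i i'
                       - gram {1..N + L - 1} (Wt_mat y N L \<omega>) i i') > \<alpha>}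
        \<le> measure P (\<Union>bk\<in>BB. E (fst bk) (snd bk))"
    by (rule finite_measure_mono[OF sub]) (use finBB Em in auto)
  also have "\<dots> \<le> (\<Sum>bk\<in>BB. measure P (E (fst bk) (snd bk)))"
    by (rule finite_measure_subadditive_finite[OF finBB]) (use Em in auto)
  also have "\<dots> \<le> (\<Sum>bk\<in>BB. exp (- s / (8 * v)) * sqrt 2 ^ M)"
    by (intro sum_mono Ebound)
  also have "\<dots> = real (9 * L) * (exp (- s / (8 * v)) * sqrt 2 ^ M)"
    unfolding BB_def by (simp add: card_cartesian_product)
  finally show ?thesis unfolding s_def v_def .
qed

lemma exponent_arith:
  fixes x l n c R \<alpha> :: real
  assumes x: "0 \<le> x" and l: "0 < l" and n: "0 < n" and c: "0 < c" and R: "0 < R"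
    and xl: "x * l \<le> 2 * c * n" and a: "96 * c * R \<le> \<alpha>"
  shows "- (n * (\<alpha> / 3)) / (8 * (2 * l * R)) + x / 2 \<le> - (1 / (192 * c * R)) * x * \<alpha>"
proof -
  have cR: "0 < c * R" using c R by simp
  have a0: "0 \<le> \<alpha>" using a cR by linarith
  define A where "A = 96 * c * R"
  define B where "B = 48 * l * R"
  have A0: "0 < A" and B0: "0 < B" unfolding A_def B_def using c R l by simp_all
  have p: "x * \<alpha> * B = (48 * \<alpha> * R) * (x * l)" unfolding B_def by (simp add: algebra_simps)
  have q: "n * \<alpha> * A = (48 * \<alpha> * R) * (2 * c * n)" unfolding A_def by (simp add: algebra_simps)
  have "x * \<alpha> * B \<le> n * \<alpha> * A" unfolding p q by (rule mult_left_mono[OF xl]) (simp add: a0 R less_imp_le)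
  then have "x * \<alpha> * B / (A * B) \<le> n * \<alpha> * A / (A * B)"
    by (rule divide_right_mono) (use A0 B0 in simp)
  also have "x * \<alpha> * B / (A * B) = x * \<alpha> / A" using B0 by simp
  also have "n * \<alpha> * A / (A * B) = n * \<alpha> / B" using A0 by simp
  finally have h1: "x * \<alpha> / A \<le> n * \<alpha> / B" .
  define b where "b = x * \<alpha> / (192 * c * R)"
  have b2: "x * \<alpha> / A = 2 * b" unfolding A_def b_def by (simp add: mult_ac)
  have "1 / 2 \<le> \<alpha> / (192 * c * R)"
    using a cR c R by (simp add: le_divide_eq mult_ac)
  then have "x * (1 / 2) \<le> x * (\<alpha> / (192 * c * R))" by (rule mult_left_mono[OF _ x])
  then have h2: "x / 2 \<le> b" unfolding b_def by simp
  have e1: "- (n * (\<alpha> / 3)) / (8 * (2 * l * R)) = - (n * \<alpha> / B)" unfolding B_def by simp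
  have e2: "- (1 / (192 * c * R)) * x * \<alpha> = - b" unfolding b_def by simp
  show ?thesis unfolding e1 e2 using h1 h2 b2 by linarith
qed

lemma sqrt2_pow_le: "sqrt 2 ^ M \<le> exp (real M / 2)"
proof -
  have "2 \<le> exp (1::real)" using exp_ge_add_one_self[of 1] by simp
  also have "exp (1::real) = (exp (1/2))\<^sup>2" by (simp add: power2_eq_square exp_add[symmetric])
  finally have "(sqrt 2)\<^sup>2 \<le> (exp (1/2::real))\<^sup>2" by simp
  then have s: "sqrt 2 \<le> exp (1/2::real)" by (rule power2_le_imp_le) simp
  have "sqrt 2 ^ M \<le> exp (1/2) ^ M" by (rule power_mono[OF s]) simp
  also have "\<dots> = exp (real M / 2)" by (simp add: exp_of_nat_mult[symmetric])
  finally show ?thesis .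
qed

theorem proposition2p2:
  fixes P :: "'a measure"
    and y :: "nat \<Rightarrow> int \<Rightarrow> 'a \<Rightarrow> complex"
    and r :: "nat \<Rightarrow> int \<Rightarrow> complex"
    and M L :: "nat \<Rightarrow> nat"
    and c_star \<beta> :: real
  assumes prob: "prob_space P"
    \<comment> \<open>(A1)\<close>
    and gauss: "\<And>m. m \<ge> 1 \<Longrightarrow> zm_ccs_gaussian_series P (y m)"
    and autocov: "\<And>m n k. m \<ge> 1 \<Longrightarrow>
                    integral\<^sup>L P (\<lambda>\<omega>. y m (n + k) \<omega> * cnj (y m n \<omega>)) = r m k"
    and indep: "prob_space.indep_vars P (\<lambda>_. Pi\<^sub>M (UNIV :: int set) (\<lambda>_. borel))
                  (\<lambda>m \<omega>. \<lambda>n. y m n \<omega>) {1..}"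
    \<comment> \<open>(A2)\<close>
    and M_lim: "filterlim M at_top sequentially"
    and c_pos: "c_star > 0"
    and prod_lim: "(\<lambda>N. real (M N) * real (L N) / real N) \<longlonglongrightarrow> c_star"
    and \<beta>: "0 < \<beta>" "\<beta> < 1"
    and L_growth: "(\<lambda>N. real (L N)) \<in> O(\<lambda>N. real N powr \<beta>)"
    \<comment> \<open>(A3)\<close>
    and S_sup: "\<exists>B. \<forall>m\<ge>1. \<forall>\<nu>. Re (spectral_density (r m) \<nu>) \<le> B"
    and S_inf: "\<exists>b>0. \<forall>m\<ge>1. \<forall>\<nu>. Re (spectral_density (r m) \<nu>) \<ge> b"
    \<comment> \<open>(A5)\<close>
    and A5: "\<exists>\<gamma>\<^sub>0>0. \<exists>C. \<forall>m\<ge>1.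
               (\<lambda>n. (1 + \<bar>real_of_int n\<bar>) powr \<gamma>\<^sub>0 * cmod (r m n)) summable_on (UNIV :: int set) \<and>
               (\<Sum>\<^sub>\<infinity>n\<in>(UNIV :: int set). (1 + \<bar>real_of_int n\<bar>) powr \<gamma>\<^sub>0 * cmod (r m n)) \<le> C"
  shows "\<exists>\<kappa>\<^sub>1>0. \<exists>\<kappa>\<^sub>2>0. \<exists>\<alpha>\<^sub>0. \<exists>N\<^sub>0. \<forall>\<alpha>\<ge>\<alpha>\<^sub>0. \<forall>N\<ge>N\<^sub>0.
           measure P {\<omega> \<in> space P.
             opnorm ({1..L N} \<times> {1..M N}) ({1..L N} \<times> {1..M N})
               (\<lambda>i i'. gram {1..N} (W_mat y N \<omega>) i i'
                       - gram {1..N + L N - 1} (Wt_mat y N (L N) \<omega>) i i') > \<alpha>}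
           \<le> \<kappa>\<^sub>1 * real (L N) * exp (- \<kappa>\<^sub>2 * real (M N) * \<alpha>)"
proof -
  interpret p: prob_space P by (rule prob)
  obtain \<gamma> Cc where \<gamma>: "\<gamma> > 0" and Cs: "\<And>m. m \<ge> 1 \<Longrightarrow>
      (\<lambda>n. (1 + \<bar>real_of_int n\<bar>) powr \<gamma> * cmod (r m n)) summable_on (UNIV :: int set) \<and>
      (\<Sum>\<^sub>\<infinity>n\<in>(UNIV :: int set). (1 + \<bar>real_of_int n\<bar>) powr \<gamma> * cmod (r m n)) \<le> Cc"
    using A5 by blast
  define R where "R = max Cc 1"
  have Rp: "0 < R" unfolding R_def by simp
  have Rb: "(\<Sum>d\<in>F. cmod (r m d)) \<le> R" if m: "m \<ge> 1" and F: "finite F" for m F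
  proof -
    have "(\<Sum>d\<in>F. cmod (r m d)) \<le> (\<Sum>d\<in>F. (1 + \<bar>real_of_int d\<bar>) powr \<gamma> * cmod (r m d))"
    proof (rule sum_mono)
      fix d
      have "1 \<le> (1 + \<bar>real_of_int d\<bar>) powr \<gamma>" by (rule ge_one_powr_ge_zero) (use \<gamma> in auto)
      then show "cmod (r m d) \<le> (1 + \<bar>real_of_int d\<bar>) powr \<gamma> * cmod (r m d)"
        using mult_right_mono[of 1 "(1 + \<bar>real_of_int d\<bar>) powr \<gamma>" "cmod (r m d)"] by simp
    qed
    also have "\<dots> \<le> (\<Sum>\<^sub>\<infinity>n\<in>(UNIV :: int set). (1 + \<bar>real_of_int n\<bar>) powr \<gamma> * cmod (r m n))"
      by (rule finite_sum_le_infsum) (use Cs[OF m] F in auto)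
    also have "\<dots> \<le> Cc" using Cs[OF m] by blast
    also have "\<dots> \<le> R" unfolding R_def by simp
    finally show ?thesis .
  qed
  have ev1: "eventually (\<lambda>N. c_star / 2 < real (M N) * real (L N) / real N) sequentially"
    by (rule order_tendstoD(1)[OF prod_lim]) (use c_pos in simp)
  have ev2: "eventually (\<lambda>N. real (M N) * real (L N) / real N < 2 * c_star) sequentially"
    by (rule order_tendstoD(2)[OF prod_lim]) (use c_pos in simp)
  have ev3: "eventually (\<lambda>N. nat \<lceil>2 * c_star\<rceil> + 1 \<le> M N) sequentially"
    using M_lim by (simp add: filterlim_at_top)
  obtain N0 where N0: "\<And>N. N \<ge> N0 \<Longrightarrow> c_star / 2 < real (M N) * real (L N) / real N
      \<and> real (M N) * real (L N) / real N < 2 * c_star \<and> nat \<lceil>2 * c_star\<rceil> + 1 \<le> M N"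
    using eventually_conj[OF ev1 eventually_conj[OF ev2 ev3]] unfolding eventually_sequentially by blast
  define \<kappa>2 where "\<kappa>2 = 1 / (192 * c_star * R)"
  have k2: "0 < \<kappa>2" unfolding \<kappa>2_def using c_pos Rp by simp
  have main: "\<forall>\<alpha>\<ge>96 * c_star * R. \<forall>N\<ge>N0.
           measure P {\<omega> \<in> space P.
             opnorm ({1..L N} \<times> {1..M N}) ({1..L N} \<times> {1..M N})
               (\<lambda>i i'. gram {1..N} (W_mat y N \<omega>) i i'
                       - gram {1..N + L N - 1} (Wt_mat y N (L N) \<omega>) i i') > \<alpha>}
           \<le> 9 * real (L N) * exp (- \<kappa>2 * real (M N) * \<alpha>)"
  proof (intro allI impI)
    fix \<alpha> :: real and N :: nat
    assume \<alpha>: "96 * c_star * R \<le> \<alpha>" and N: "N0 \<le> N"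
    note NN = N0[OF N]
    have cR: "0 < c_star * R" using c_pos Rp by simp
    have a0: "0 \<le> \<alpha>" using \<alpha> cR by linarith
    have Npos: "0 < N"
    proof (rule ccontr)
      assume "\<not> 0 < N" then have "N = 0" by simp
      then show False using NN c_pos by simp
    qed
    have Mge: "2 * c_star < real (M N)"
    proof -
      have "2 * c_star \<le> real_of_int \<lceil>2 * c_star\<rceil>" by (rule le_of_int_ceiling)
      also have "\<dots> \<le> real (nat \<lceil>2 * c_star\<rceil>)" by simp
      also have "\<dots> < real (M N)" using NN by linarith
      finally show ?thesis .
    qed
    have Lpos: "1 \<le> L N"
    proof (rule ccontr)
      assume "\<not> 1 \<le> L N" then have "L N = 0" by simp
      then show False using NN c_pos by simp
    qed
    have xl: "real (M N) * real (L N) \<le> 2 * c_star * real N"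
      using NN Npos by (simp add: divide_less_eq less_imp_le)
    have LN: "L N \<le> N"
    proof -
      have "real (M N) * real (L N) \<le> real (M N) * real N"
        using xl Mge Npos by (smt (verit) mult_right_mono of_nat_0_le_iff)
      then have "real (L N) \<le> real N" using Mge c_pos
        by (smt (verit) mult_le_cancel_left_pos)
      then show ?thesis by simp
    qed
    note fb = fixed_N_bound[OF prob gauss autocov indep Rb Rp Lpos LN a0, of "M N"]
    have ex: "exp (- (real N * (\<alpha> / 3)) / (8 * (2 * real (L N) * R))) * sqrt 2 ^ M N
        \<le> exp (- \<kappa>2 * real (M N) * \<alpha>)"
    proof -
      have "exp (- (real N * (\<alpha> / 3)) / (8 * (2 * real (L N) * R))) * sqrt 2 ^ M N
          \<le> exp (- (real N * (\<alpha> / 3)) / (8 * (2 * real (L N) * R))) * exp (real (M N) / 2)"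
        by (rule mult_left_mono[OF sqrt2_pow_le]) simp
      also have "\<dots> = exp (- (real N * (\<alpha> / 3)) / (8 * (2 * real (L N) * R)) + real (M N) / 2)"
        by (rule exp_add[symmetric])
      also have "\<dots> \<le> exp (- (1 / (192 * c_star * R)) * real (M N) * \<alpha>)"
        by (rule exp_mono[OF exponent_arith]) (use Lpos Npos c_pos Rp xl \<alpha> in auto)
      finally show ?thesis unfolding \<kappa>2_def .
    qed
    show "measure P {\<omega> \<in> space P.
             opnorm ({1..L N} \<times> {1..M N}) ({1..L N} \<times> {1..M N})
               (\<lambda>i i'. gram {1..N} (W_mat y N \<omega>) i i'
                       - gram {1..N + L N - 1} (Wt_mat y N (L N) \<omega>) i i') > \<alpha>}
           \<le> 9 * real (L N) * exp (- \<kappa>2 * real (M N) * \<alpha>)"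
    proof (rule order.trans[OF fb])
      have "real (9 * L N) * (exp (- (real N * (\<alpha> / 3)) / (8 * (2 * real (L N) * R))) * sqrt 2 ^ M N)
          \<le> real (9 * L N) * exp (- \<kappa>2 * real (M N) * \<alpha>)"
        by (rule mult_left_mono[OF ex]) simp
      also have "\<dots> = 9 * real (L N) * exp (- \<kappa>2 * real (M N) * \<alpha>)" by simp
      finally show "real (9 * L N) * (exp (- (real N * (\<alpha> / 3)) / (8 * (2 * real (L N) * R))) * sqrt 2 ^ M N)
          \<le> 9 * real (L N) * exp (- \<kappa>2 * real (M N) * \<alpha>)" .
    qed
  qed
  show ?thesis
    apply (rule exI[of _ "9::real"])
    apply (rule conjI, simp)
    apply (rule exI[of _ \<kappa>2])
    apply (rule conjI, rule k2)
    apply (rule exI[of _ "96 * c_star * R"])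
    apply (rule exI[of _ N0])
    by (rule main)
qed

end
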